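(* Let $x\in V^p([0,T],\mathcal L(\mathbb V,\mathbb W))$ and $y\in V^q([0,T],\mathbb V)$ with $\frac1p+\frac1q>1$. If $x$ is càdlàg, then for every $t\in[0,T]$ $$\int_0^tx_r\,d\overleftarrow{y_r}-\int_0^tx_r\,dy_r=\sum_{0<r\le t}\Delta^-x_r\,\Delta^-y_r.$$ If $y$ is càglàd, then for every $t\in[0,T]$ $$\int_0^tx_r\,d\overleftarrow{y_r}-\int_0^tx_r\,dy_r=\sum_{0\le r<t}\Delta^+x_r\,\Delta^+y_r.$$ In particular, if $x$ is càdlàg and $y$ is càglàd, the backward and forward Young integrals coincide.
   Context: $\mathbb V,\mathbb W$ finite-dimensional Banach spaces; $V^p([0,T],E)$ the paths of finite $p$-variation; $\Delta^-x_t:=x_t-x_{t-}$, $\Delta^+x_t:=x_{t+}-x_t$. The backward Young integral $\int_0^tx_r\,d\overleftarrow{y_r}$ is the (RRS) limit of $\sum_ix_{t_{i+1}}(y_{t_{i+1}}-y_{t_i})$ and the forward Young integral $\int_0^tx_rdy_r$ the (RRS) limit of $\sum_ix_{t_i}(y_{t_{i+1}}-y_{t_i})$, over partitions of $[0,t]$; RRS limit means: for every $\varepsilon$ there is a partition such that all refinements give sums within $\varepsilon$ of the limit. *)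

theory Defs
  imports "HOL-Analysis.Analysis"
begin

definition partition_of :: "real \<Rightarrow> real \<Rightarrow> real set \<Rightarrow> bool" where
  "partition_of a b P \<longleftrightarrow> finite P \<and> P \<subseteq> {a..b} \<and> a \<in> P \<and> b \<in> P"

definition pvar_sum :: "real \<Rightarrow> (real \<Rightarrow> 'a::real_normed_vector) \<Rightarrow> real set \<Rightarrow> real" where
  "pvar_sum p f P = (let ts = sorted_list_of_set P in
     (\<Sum>i<length ts - 1. norm (f (ts ! Suc i) - f (ts ! i)) powr p))"

definition finite_pvar :: "real \<Rightarrow> real \<Rightarrow> real \<Rightarrow> (real \<Rightarrow> 'a::real_normed_vector) \<Rightarrow> bool" where
  "finite_pvar p a b f \<longleftrightarrow> (\<exists>M. \<forall>P. partition_of a b P \<longrightarrow> pvar_sum p f P \<le> M)"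

definition fwd_sum :: "(real \<Rightarrow> 'v::real_normed_vector \<Rightarrow>\<^sub>L 'w::real_normed_vector) \<Rightarrow> (real \<Rightarrow> 'v) \<Rightarrow> real set \<Rightarrow> 'w" where
  "fwd_sum x y P = (let ts = sorted_list_of_set P in
     (\<Sum>i<length ts - 1. blinfun_apply (x (ts ! i)) (y (ts ! Suc i) - y (ts ! i))))"

definition bwd_sum :: "(real \<Rightarrow> 'v::real_normed_vector \<Rightarrow>\<^sub>L 'w::real_normed_vector) \<Rightarrow> (real \<Rightarrow> 'v) \<Rightarrow> real set \<Rightarrow> 'w" where
  "bwd_sum x y P = (let ts = sorted_list_of_set P in
     (\<Sum>i<length ts - 1. blinfun_apply (x (ts ! Suc i)) (y (ts ! Suc i) - y (ts ! i))))"

definition RRS_has_limit :: "(real set \<Rightarrow> 'a::real_normed_vector) \<Rightarrow> real \<Rightarrow> 'a \<Rightarrow> bool" where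
  "RRS_has_limit S t I \<longleftrightarrow>
     (\<forall>\<epsilon>>0. \<exists>P0. partition_of 0 t P0 \<and>
        (\<forall>P. partition_of 0 t P \<and> P0 \<subseteq> P \<longrightarrow> norm (S P - I) < \<epsilon>))"

definition has_fwd_young :: "(real \<Rightarrow> 'v::real_normed_vector \<Rightarrow>\<^sub>L 'w::real_normed_vector) \<Rightarrow> (real \<Rightarrow> 'v) \<Rightarrow> real \<Rightarrow> 'w \<Rightarrow> bool" where
  "has_fwd_young x y t I \<longleftrightarrow> RRS_has_limit (fwd_sum x y) t I"

definition has_bwd_young :: "(real \<Rightarrow> 'v::real_normed_vector \<Rightarrow>\<^sub>L 'w::real_normed_vector) \<Rightarrow> (real \<Rightarrow> 'v) \<Rightarrow> real \<Rightarrow> 'w \<Rightarrow> bool" where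
  "has_bwd_young x y t I \<longleftrightarrow> RRS_has_limit (bwd_sum x y) t I"

definition left_lim :: "(real \<Rightarrow> 'a::t2_space) \<Rightarrow> real \<Rightarrow> 'a" where
  "left_lim f t = Lim (at_left t) f"

definition right_lim :: "(real \<Rightarrow> 'a::t2_space) \<Rightarrow> real \<Rightarrow> 'a" where
  "right_lim f t = Lim (at_right t) f"

definition jump_left :: "(real \<Rightarrow> 'a::real_normed_vector) \<Rightarrow> real \<Rightarrow> 'a" where
  "jump_left f t = f t - left_lim f t"

definition jump_right :: "(real \<Rightarrow> 'a::real_normed_vector) \<Rightarrow> real \<Rightarrow> 'a" where
  "jump_right f t = right_lim f t - f t"

definition cadlag_on :: "real \<Rightarrow> (real \<Rightarrow> 'a::topological_space) \<Rightarrow> bool" where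
  "cadlag_on T f \<longleftrightarrow> (\<forall>t\<in>{0..<T}. continuous (at_right t) f) \<and>
                      (\<forall>t\<in>{0<..T}. \<exists>l. (f \<longlongrightarrow> l) (at_left t))"

definition caglad_on :: "real \<Rightarrow> (real \<Rightarrow> 'a::topological_space) \<Rightarrow> bool" where
  "caglad_on T f \<longleftrightarrow> (\<forall>t\<in>{0<..T}. continuous (at_left t) f) \<and>
                      (\<forall>t\<in>{0..<T}. \<exists>l. (f \<longlongrightarrow> l) (at_right t))"

end

theory Submission
  imports Defs
begin


definition nxt :: "real set \<Rightarrow> real \<Rightarrow> real" where
  "nxt P s = Min {u\<in>P. s < u}"

definition gsum :: "(real \<Rightarrow> real \<Rightarrow> 'a::comm_monoid_add) \<Rightarrow> real set \<Rightarrow> 'a" where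
  "gsum g P = (\<Sum>s\<in>{s\<in>P. s < Max P}. g s (nxt P s))"

lemma nxt_props:
  assumes "finite P" "s \<in> P" "s < Max P"
  shows "nxt P s \<in> P" "s < nxt P s" "\<And>u. u \<in> P \<Longrightarrow> s < u \<Longrightarrow> nxt P s \<le> u"
proof -
  have "P \<noteq> {}" using assms by auto
  then have "Max P \<in> P" using assms by auto
  then have ne: "{u\<in>P. s < u} \<noteq> {}" using assms by blast
  have fin: "finite {u\<in>P. s < u}" using assms by auto
  show "nxt P s \<in> P" "s < nxt P s" using Min_in[OF fin ne] unfolding nxt_def by auto
  show "\<And>u. u \<in> P \<Longrightarrow> s < u \<Longrightarrow> nxt P s \<le> u" unfolding nxt_def using fin by auto
qed

lemma nxt_between:
  assumes "finite P" "s \<in> P" "s < Max P" "u \<in> P" "s < u" "u < nxt P s"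
  shows False
  using nxt_props(3)[OF assms(1-3) assms(4,5)] assms(6) by auto

lemma nxt_eqI:
  assumes "finite P" "s \<in> P" "r \<in> P" "s < r" "\<And>u. u \<in> P \<Longrightarrow> s < u \<Longrightarrow> r \<le> u"
  shows "nxt P s = r"
proof -
  have fin: "finite {u\<in>P. s < u}" using assms by auto
  show ?thesis unfolding nxt_def
    by (rule Min_eqI[OF fin]) (use assms in auto)
qed

lemma nxt_subset:
  assumes "finite P" "Q \<subseteq> P" "s \<in> Q" "s < Max P" "nxt P s \<in> Q"
  shows "nxt Q s = nxt P s"
  using assms nxt_props[OF assms(1) _ assms(4)] by (intro nxt_eqI) (auto intro: finite_subset)

lemma Max_le_split: "finite P \<Longrightarrow> c \<in> P \<Longrightarrow> Max (P \<inter> {..c}) = c"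
  by (intro Max_eqI) auto

lemma Max_ge_split: "finite P \<Longrightarrow> c \<in> P \<Longrightarrow> Max (P \<inter> {c..}) = Max P"
proof -
  assume a: "finite P" "c \<in> P"
  have "P \<noteq> {}" using a by auto
  then have "Max P \<in> P" "c \<le> Max P" using a by auto
  then show ?thesis using a by (intro Max_eqI) auto
qed

lemma gsum_split:
  assumes "finite P" "c \<in> P"
  shows "gsum g P = gsum g (P \<inter> {..c}) + gsum g (P \<inter> {c..})"
proof -
  have M1: "Max (P \<inter> {..c}) = c" and M2: "Max (P \<inter> {c..}) = Max P"
    using Max_le_split Max_ge_split assms by auto
  have cM: "c \<le> Max P" using assms by auto
  have I: "{s\<in>P. s < Max P} = {s\<in>P \<inter> {..c}. s < c} \<union> {s\<in>P \<inter> {c..}. s < Max P}"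
    using cM by auto
  have "gsum g P = (\<Sum>s\<in>{s\<in>P \<inter> {..c}. s < c}. g s (nxt P s)) + (\<Sum>s\<in>{s\<in>P \<inter> {c..}. s < Max P}. g s (nxt P s))"
    unfolding gsum_def I using assms by (subst sum.union_disjoint) auto
  also have "(\<Sum>s\<in>{s\<in>P \<inter> {..c}. s < c}. g s (nxt P s)) = gsum g (P \<inter> {..c})"
    unfolding gsum_def M1
  proof (rule sum.cong[OF refl])
    fix s assume s: "s \<in> {s\<in>P \<inter> {..c}. s < c}"
    then have sM: "s < Max P" using cM by auto
    have "nxt P s \<le> c" using nxt_props(3)[OF assms(1) _ sM, of c] s assms by auto
    then have "nxt P s \<in> P \<inter> {..c}" using nxt_props(1)[OF assms(1) _ sM] s by auto
    then show "g s (nxt P s) = g s (nxt (P \<inter> {..c}) s)"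
      using nxt_subset[OF assms(1), of "P \<inter> {..c}" s] s sM by auto
  qed
  also have "(\<Sum>s\<in>{s\<in>P \<inter> {c..}. s < Max P}. g s (nxt P s)) = gsum g (P \<inter> {c..})"
    unfolding gsum_def M2
  proof (rule sum.cong[OF refl])
    fix s assume s: "s \<in> {s\<in>P \<inter> {c..}. s < Max P}"
    then have "nxt P s \<in> P \<inter> {c..}" using nxt_props(1,2)[OF assms(1), of s] by auto
    then show "g s (nxt P s) = g s (nxt (P \<inter> {c..}) s)"
      using nxt_subset[OF assms(1), of "P \<inter> {c..}" s] s by auto
  qed
  finally show ?thesis .
qed

lemma gsum_single[simp]: "gsum g {a} = 0"
proof -
  have "{s\<in>{a}. s < Max {a}} = {}" by auto
  then show ?thesis unfolding gsum_def by (simp only: sum.empty)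
qed

lemma gsum_two:
  assumes "a < b" shows "gsum g {a, b} = g a b"
proof -
  have M: "Max {a,b} = b" using assms by auto
  have "{s \<in> {a,b}. s < Max {a,b}} = {a}" using assms M by auto
  moreover have "nxt {a,b} a = b" using assms by (intro nxt_eqI) auto
  ultimately show ?thesis unfolding gsum_def by simp
qed

lemma gsum_list:
  assumes "finite P"
  shows "(let ts = sorted_list_of_set P in (\<Sum>i<length ts - 1. g (ts!i) (ts!Suc i))) = gsum g P"
proof (cases "P = {}")
  case True then show ?thesis by (simp add: gsum_def)
next
  case False
  define ts where "ts = sorted_list_of_set P"
  have st: "sorted_wrt (<) ts" unfolding ts_def by (rule strict_sorted_list_of_set)
  have set: "set ts = P" unfolding ts_def using assms by simp
  have len: "length ts > 0" using set False by auto
  have lt: "ts!i < ts!j" if "i < j" "j < length ts" for i j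
    using sorted_wrt_nth_less[OF st that] .
  have le_iff: "ts!i < ts!j \<longleftrightarrow> i < j" if "i < length ts" "j < length ts" for i j
    using that by (cases i j rule: linorder_cases) (auto dest: lt)
  have Mx: "Max P = ts!(length ts - 1)"
  proof (rule Max_eqI)
    show "finite P" by fact
    show "ts ! (length ts - 1) \<in> P" using set len by auto
    fix u assume "u \<in> P"
    then obtain j where j: "j < length ts" "u = ts!j" using set by (auto simp: in_set_conv_nth)
    show "u \<le> ts ! (length ts - 1)"
    proof (cases "j = length ts - 1")
      case False
      then have "j < length ts - 1" using j by linarith
      then show ?thesis using lt[of j "length ts - 1"] j len by auto
    qed (use j in simp)
  qed
  have bij: "bij_betw (\<lambda>i. ts!i) {..<length ts - 1} {s\<in>P. s < Max P}"
  proof (rule bij_betw_imageI)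
    have dist: "distinct ts" using st strict_sorted_iff by auto
    show "inj_on ((!) ts) {..<length ts - 1}"
      by (auto simp: inj_on_def nth_eq_iff_index_eq[OF dist])
    show "(!) ts ` {..<length ts - 1} = {s \<in> P. s < Max P}"
    proof
      show "(!) ts ` {..<length ts - 1} \<subseteq> {s \<in> P. s < Max P}"
        using set Mx lt by auto
      show "{s \<in> P. s < Max P} \<subseteq> (!) ts ` {..<length ts - 1}"
      proof
        fix s assume "s \<in> {s \<in> P. s < Max P}"
        then obtain j where j: "j < length ts" "s = ts!j" "ts!j < ts!(length ts - 1)"
          using set Mx by (auto simp: in_set_conv_nth)
        then have "j < length ts - 1" using le_iff[of j "length ts - 1"] len by auto
        then show "s \<in> (!) ts ` {..<length ts - 1}" using j by auto
      qed
    qed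
  qed
  have nx: "nxt P (ts!i) = ts!Suc i" if "i < length ts - 1" for i
  proof (rule nxt_eqI[OF assms])
    show "ts ! i \<in> P" "ts ! Suc i \<in> P" using that set by auto
    show "ts ! i < ts ! Suc i" using that lt by auto
    fix u assume "u \<in> P" "ts ! i < u"
    then obtain j where j: "j < length ts" "u = ts!j" using set by (auto simp: in_set_conv_nth)
    then have "i < j" using le_iff[of i j] that \<open>ts ! i < u\<close> by auto
    then show "ts ! Suc i \<le> u" using j lt[of "Suc i" j] by (cases "Suc i = j") auto
  qed
  have "(\<Sum>i<length ts - 1. g (ts!i) (ts!Suc i)) = (\<Sum>i<length ts - 1. g (ts!i) (nxt P (ts!i)))"
    using nx by auto
  also have "\<dots> = gsum g P" unfolding gsum_def
    by (rule sum.reindex_bij_betw[OF bij, where g = "\<lambda>s. g s (nxt P s)"])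
  finally show ?thesis unfolding ts_def Let_def .
qed

lemma set_three:
  assumes "finite P" "s \<in> P" "s < Max P" "nxt P s < Max P"
  shows "P \<inter> {s..nxt P (nxt P s)} = {s, nxt P s, nxt P (nxt P s)}"
proof -
  let ?c = "nxt P s" let ?w = "nxt P ?c"
  have c: "?c \<in> P" "s < ?c" using nxt_props[OF assms(1-3)] by auto
  have w: "?w \<in> P" "?c < ?w" using nxt_props[OF assms(1) c(1) assms(4)] by auto
  show ?thesis
  proof
    show "{s, ?c, ?w} \<subseteq> P \<inter> {s..?w}" using c w assms by auto
    show "P \<inter> {s..?w} \<subseteq> {s, ?c, ?w}"
    proof
      fix u assume u: "u \<in> P \<inter> {s..?w}"
      show "u \<in> {s, ?c, ?w}"
      proof (rule ccontr)
        assume n: "u \<notin> {s, ?c, ?w}"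
        then have "s < u" "u < ?w" using u by auto
        show False
        proof (cases "u < ?c")
          case True then show False using nxt_between[OF assms(1-3), of u] u \<open>s < u\<close> by auto
        next
          case False then have "?c < u" using n by auto
          then show False using nxt_between[OF assms(1) c(1) assms(4), of u] u \<open>u < ?w\<close> by auto
        qed
      qed
    qed
  qed
qed

lemma gsum_remove:
  fixes g :: "real \<Rightarrow> real \<Rightarrow> 'a::ab_group_add"
  assumes "finite P" "s \<in> P" "s < Max P" "nxt P s < Max P"
  shows "gsum g P = gsum g (P - {nxt P s}) + (g s (nxt P s) + g (nxt P s) (nxt P (nxt P s)) - g s (nxt P (nxt P s)))"
proof -
  let ?c = "nxt P s" let ?w = "nxt P ?c"
  have c: "?c \<in> P" "s < ?c" using nxt_props[OF assms(1-3)] by auto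
  have w: "?w \<in> P" "?c < ?w" using nxt_props[OF assms(1) c(1) assms(4)] by auto
  have three: "P \<inter> {s..?w} = {s, ?c, ?w}" by (rule set_three[OF assms])
  have A: "gsum g P = gsum g (P \<inter> {..s}) + (gsum g {s,?c,?w} + gsum g (P \<inter> {?w..}))"
  proof -
    have "gsum g P = gsum g (P \<inter> {..s}) + gsum g (P \<inter> {s..})" by (rule gsum_split[OF assms(1,2)])
    also have "gsum g (P \<inter> {s..}) = gsum g (P \<inter> {s..} \<inter> {..?w}) + gsum g (P \<inter> {s..} \<inter> {?w..})"
      using w c assms by (intro gsum_split) auto
    also have "P \<inter> {s..} \<inter> {..?w} = {s,?c,?w}" unfolding three[symmetric] by (simp only: Int_assoc atLeastAtMost_def)
    also have "P \<inter> {s..} \<inter> {?w..} = P \<inter> {?w..}" using c w by auto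
    finally show ?thesis .
  qed
  have B: "gsum g (P - {?c}) = gsum g (P \<inter> {..s}) + (gsum g {s,?w} + gsum g (P \<inter> {?w..}))"
  proof -
    have "gsum g (P - {?c}) = gsum g ((P - {?c}) \<inter> {..s}) + gsum g ((P - {?c}) \<inter> {s..})"
      using c assms by (intro gsum_split) auto
    also have "(P - {?c}) \<inter> {..s} = P \<inter> {..s}" using c by auto
    also have "gsum g ((P - {?c}) \<inter> {s..}) = gsum g ((P - {?c}) \<inter> {s..} \<inter> {..?w}) + gsum g ((P - {?c}) \<inter> {s..} \<inter> {?w..})"
      using w c assms by (intro gsum_split) auto
    also have "(P - {?c}) \<inter> {s..} \<inter> {..?w} = (P \<inter> {s..?w}) - {?c}" by auto
    also have "\<dots> = {s,?w}" unfolding three using c w by auto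
    also have "(P - {?c}) \<inter> {s..} \<inter> {?w..} = P \<inter> {?w..}" using c w by auto
    finally show ?thesis .
  qed
  have C: "gsum g {s,?c,?w} = g s ?c + g ?c ?w"
  proof -
    have "gsum g {s,?c,?w} = gsum g ({s,?c,?w} \<inter> {..?c}) + gsum g ({s,?c,?w} \<inter> {?c..})"
      by (intro gsum_split) auto
    also have "{s,?c,?w} \<inter> {..?c} = {s,?c}" using c w by auto
    also have "{s,?c,?w} \<inter> {?c..} = {?c,?w}" using c w by auto
    finally show ?thesis using gsum_two[of s ?c g] gsum_two[of ?c ?w g] c w by simp
  qed
  have D: "gsum g {s,?w} = g s ?w" using c w by (intro gsum_two) auto
  show ?thesis using A B C D by (simp add: algebra_simps)
qed

lemma nxt_mono:
  assumes "finite P" "s1 \<in> P" "s2 \<in> P" "s1 < s2" "s2 < Max P"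
  shows "nxt P s1 < nxt P s2"
proof -
  have "s1 < Max P" using assms by auto
  then have "nxt P s1 \<le> s2" using nxt_props(3)[OF assms(1,2)] assms by auto
  then show ?thesis using nxt_props(2)[OF assms(1,3,5)] by auto
qed

lemma nxt_bij:
  assumes "finite P"
  shows "bij_betw (nxt P) {s\<in>P. s < Max P} (P - {Min P})"
proof (rule bij_betw_imageI)
  show "inj_on (nxt P) {s \<in> P. s < Max P}"
  proof (rule inj_onI)
    fix a b assume a: "a \<in> {s \<in> P. s < Max P}" and b: "b \<in> {s \<in> P. s < Max P}" and e: "nxt P a = nxt P b"
    show "a = b"
    proof (rule ccontr)
      assume "a \<noteq> b"
      then consider "a < b" | "b < a" by linarith
      then show False using nxt_mono[OF assms, of a b] nxt_mono[OF assms, of b a] a b e by auto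
    qed
  qed
  show "nxt P ` {s \<in> P. s < Max P} = P - {Min P}"
  proof
    show "nxt P ` {s \<in> P. s < Max P} \<subseteq> P - {Min P}"
    proof
      fix r assume "r \<in> nxt P ` {s \<in> P. s < Max P}"
      then obtain s where s: "s \<in> P" "s < Max P" "r = nxt P s" by auto
      then have "r \<in> P" "s < r" using nxt_props[OF assms s(1,2)] by auto
      moreover have "Min P \<le> s" using s assms by auto
      ultimately show "r \<in> P - {Min P}" by auto
    qed
    show "P - {Min P} \<subseteq> nxt P ` {s \<in> P. s < Max P}"
    proof
      fix r assume r: "r \<in> P - {Min P}"
      then have ne: "P \<noteq> {}" by auto
      have mr: "Min P < r" using r assms by (metis DiffD1 DiffD2 Min_le insertI1 order_le_imp_less_or_eq)
      define S where "S = {u\<in>P. u < r}"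
      have Sf: "finite S" "S \<noteq> {}" unfolding S_def using assms mr Min_in[OF assms ne] by auto
      define s where "s = Max S"
      have s: "s \<in> P" "s < r" using Max_in[OF Sf] unfolding s_def S_def by auto
      have rM: "r \<le> Max P" using r assms by auto
      have "nxt P s = r"
      proof (rule nxt_eqI[OF assms s(1)])
        show "r \<in> P" "s < r" using r s by auto
        fix u assume "u \<in> P" "s < u"
        show "r \<le> u"
        proof (rule ccontr)
          assume "\<not> r \<le> u"
          then have "u \<in> S" using \<open>u \<in> P\<close> unfolding S_def by auto
          then have "u \<le> s" unfolding s_def using Sf by auto
          then show False using \<open>s < u\<close> by auto
        qed
      qed
      then show "r \<in> nxt P ` {s \<in> P. s < Max P}" using s rM by force
    qed
  qed
qed



lemma max_remove:
  assumes "finite P" "P - {Max P} \<noteq> {}"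
  defines "b' \<equiv> Max (P - {Max P})"
  shows "b' \<in> P" "b' < Max P" "P \<inter> {..b'} = P - {Max P}" "P \<inter> {b'..} = {b', Max P}"
    "nxt P b' = Max P"
proof -
  have f': "finite (P - {Max P})" using assms by auto
  have ne: "P \<noteq> {}" using assms by auto
  have b'P: "b' \<in> P - {Max P}" unfolding b'_def using Max_in[OF f' assms(2)] .
  then show "b' \<in> P" by auto
  have "b' \<le> Max P" using b'P assms by auto
  then show lt: "b' < Max P" using b'P by auto
  have le: "u \<le> b'" if "u \<in> P" "u \<noteq> Max P" for u
    unfolding b'_def using that f' by auto
  show "P \<inter> {..b'} = P - {Max P}" using le lt by auto
  show "P \<inter> {b'..} = {b', Max P}" using le lt b'P Max_in[OF assms(1) ne] by force
  show "nxt P b' = Max P"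
    using le lt b'P Max_in[OF assms(1) ne] by (intro nxt_eqI[OF assms(1)]) force+
qed

lemma gsum_le_superadd:
  fixes w :: "real \<Rightarrow> real \<Rightarrow> real"
  assumes "finite P" "P \<noteq> {}" "P \<subseteq> {lo..hi}"
    and sa: "\<And>a c b. lo \<le> a \<Longrightarrow> a \<le> c \<Longrightarrow> c \<le> b \<Longrightarrow> b \<le> hi \<Longrightarrow> w a c + w c b \<le> w a b"
    and z: "\<And>a. lo \<le> a \<Longrightarrow> a \<le> hi \<Longrightarrow> 0 \<le> w a a"
  shows "gsum w P \<le> w (Min P) (Max P)"
proof -
  have "\<And>P. card P = n \<Longrightarrow> finite P \<Longrightarrow> P \<noteq> {} \<Longrightarrow> P \<subseteq> {lo..hi} \<Longrightarrow> gsum w P \<le> w (Min P) (Max P)" for n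
  proof (induction n rule: less_induct)
    case (less n P)
    show ?case
    proof (cases "P - {Max P} = {}")
      case True
      then have "P = {Max P}" using less.prems Max_in by blast
      then show ?thesis using z less.prems by (metis gsum_single Min_singleton atLeastAtMost_iff insert_subset)
    next
      case False
      let ?b = "Max P" let ?b' = "Max (P - {Max P})"
      note mr = max_remove[OF less.prems(2) False]
      have bP: "?b \<in> P" using less.prems Max_in by blast
      have "gsum w P = gsum w (P \<inter> {..?b'}) + gsum w (P \<inter> {?b'..})"
        by (rule gsum_split[OF less.prems(2) mr(1)])
      also have "\<dots> = gsum w (P - {?b}) + w ?b' ?b" using mr gsum_two by simp
      also have "gsum w (P - {?b}) \<le> w (Min (P - {?b})) (Max (P - {?b}))"
      proof (rule less.IH[of "card (P - {?b})"])
        show "card (P - {?b}) < n" using card_Diff1_less[OF less.prems(2) bP] less.prems(1) by simp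
      qed (use less.prems False in auto)
      also have "Min (P - {?b}) = Min P"
      proof -
        have "Min P \<in> P" "Min P \<le> ?b'" using less.prems mr by auto
        moreover have "Min P \<noteq> ?b" using \<open>Min P \<le> ?b'\<close> mr by auto
        ultimately show ?thesis using less.prems by (intro Min_eqI) auto
      qed
      also have "w (Min P) ?b' + w ?b' ?b \<le> w (Min P) ?b"
      proof (rule sa)
        have m: "Min P \<in> P" using Min_in less.prems by blast
        show "lo \<le> Min P" using m less.prems(4) by auto
        show "Min P \<le> ?b'" using mr(1) less.prems(2) by simp
        show "?b' \<le> ?b" using mr(2) by simp
        show "?b \<le> hi" using bP less.prems(4) by auto
      qed
      finally show ?thesis by simp
    qed
  qed
  then show ?thesis using assms by blast
qed

lemma gsum_coarse:
  assumes "finite P" "P0 \<subseteq> P" "P0 \<noteq> {}" "P \<subseteq> {Min P0..Max P0}"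
  shows "gsum g P = (\<Sum>s\<in>{s\<in>P0. s < Max P0}. gsum g (P \<inter> {s..nxt P0 s}))"
proof -
  have "\<And>P0 P. card P0 = n \<Longrightarrow> finite P \<Longrightarrow> P0 \<subseteq> P \<Longrightarrow> P0 \<noteq> {} \<Longrightarrow> P \<subseteq> {Min P0..Max P0} \<Longrightarrow>
     gsum g P = (\<Sum>s\<in>{s\<in>P0. s < Max P0}. gsum g (P \<inter> {s..nxt P0 s}))" for n
  proof (induction n rule: less_induct)
    case (less n P0 P)
    have f0: "finite P0" using less.prems finite_subset by blast
    show ?case
    proof (cases "P0 - {Max P0} = {}")
      case True
      then have P0: "P0 = {Max P0}" using less.prems Max_in[OF f0] by blast
      then have "Min P0 = Max P0" by (metis Min_singleton)
      then have "P = {Max P0}" using less.prems P0 by auto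
      moreover have "{s\<in>P0. s < Max P0} = {}"
      proof -
        have "\<forall>s\<in>P0. s = Max P0" using P0 by blast
        then show ?thesis by auto
      qed
      ultimately show ?thesis by (simp only: sum.empty gsum_single)
    next
      case False
      let ?b = "Max P0" let ?b' = "Max (P0 - {Max P0})"
      note mr = max_remove[OF f0 False]
      have bP: "?b \<in> P0" using less.prems Max_in f0 by blast
      have b'P: "?b' \<in> P" using mr less.prems by auto
      have "gsum g P = gsum g (P \<inter> {..?b'}) + gsum g (P \<inter> {?b'..})"
        by (rule gsum_split[OF less.prems(2) b'P])
      also have "P \<inter> {?b'..} = P \<inter> {?b'..nxt P0 ?b'}" using mr less.prems by auto
      also have "gsum g (P \<inter> {..?b'}) = (\<Sum>s\<in>{s\<in>P0 - {?b}. s < Max (P0 - {?b})}. gsum g ((P \<inter> {..?b'}) \<inter> {s..nxt (P0 - {?b}) s}))"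
      proof (rule less.IH[of "card (P0 - {?b})"])
        show "card (P0 - {?b}) < n" using card_Diff1_less[OF f0 bP] less.prems(1) by simp
        show "finite (P \<inter> {..?b'})" using less.prems by auto
        show "P0 - {?b} \<subseteq> P \<inter> {..?b'}" using mr less.prems by auto
        show "P0 - {?b} \<noteq> {}" by fact
        have "Min (P0 - {?b}) = Min P0"
        proof -
          have "Min P0 \<in> P0" "Min P0 \<le> ?b'" using less.prems mr f0 by auto
          moreover have "Min P0 \<noteq> ?b" using \<open>Min P0 \<le> ?b'\<close> mr by auto
          ultimately show ?thesis using f0 by (intro Min_eqI) auto
        qed
        then show "P \<inter> {..?b'} \<subseteq> {Min (P0 - {?b})..Max (P0 - {?b})}" using less.prems by auto
      qed (rule refl)
      also have "\<dots> = (\<Sum>s\<in>{s\<in>P0 - {?b}. s < ?b'}. gsum g (P \<inter> {s..nxt P0 s}))"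
      proof (rule sum.cong[OF refl])
        fix s assume s: "s \<in> {s\<in>P0 - {?b}. s < Max (P0 - {?b})}"
        have sb: "s < ?b" using s mr by auto
        have "nxt P0 s \<le> ?b'" using nxt_props(3)[OF f0 _ sb, of ?b'] s mr by auto
        then have eq: "nxt (P0 - {?b}) s = nxt P0 s"
          using s nxt_props(1)[OF f0 _ sb] mr by (intro nxt_subset[OF f0]) auto
        show "gsum g ((P \<inter> {..?b'}) \<inter> {s..nxt (P0 - {?b}) s}) = gsum g (P \<inter> {s..nxt P0 s})"
          unfolding eq using \<open>nxt P0 s \<le> ?b'\<close> by (intro arg_cong[where f="gsum g"]) auto
      qed
      also have "(\<Sum>s\<in>{s\<in>P0 - {?b}. s < ?b'}. gsum g (P \<inter> {s..nxt P0 s})) + gsum g (P \<inter> {?b'..nxt P0 ?b'})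
         = (\<Sum>s\<in>{s\<in>P0. s < ?b}. gsum g (P \<inter> {s..nxt P0 s}))"
      proof -
        have le: "s \<le> ?b'" if "s \<in> P0" "s \<noteq> ?b" for s using mr(3) that by blast
        have "{s\<in>P0. s < ?b} = insert ?b' {s\<in>P0 - {?b}. s < ?b'}"
        proof (intro set_eqI iffI)
          fix s assume "s \<in> {s\<in>P0. s < ?b}"
          then show "s \<in> insert ?b' {s\<in>P0 - {?b}. s < ?b'}" using le[of s] by force
        next
          fix s assume "s \<in> insert ?b' {s\<in>P0 - {?b}. s < ?b'}"
          then show "s \<in> {s\<in>P0. s < ?b}" using mr(1,2) by auto
        qed
        then show ?thesis using f0 by (simp add: add.commute)
      qed
      finally show ?thesis .
    qed
  qed
  then show ?thesis using assms by blast
qed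

lemma coarse_contain:
  assumes "finite P" "P0 \<subseteq> P" "P0 \<noteq> {}" "Min P0 = Min P" "Max P0 = Max P" "s \<in> P" "s < Max P"
  shows "\<exists>a\<in>P0. a < Max P0 \<and> a \<le> s \<and> nxt P s \<le> nxt P0 a"
proof -
  have f0: "finite P0" using assms finite_subset by blast
  define S where "S = {u\<in>P0. u \<le> s}"
  have "Min P0 \<in> P0" using Min_in[OF f0 assms(3)] .
  moreover have "Min P0 \<le> s" using assms(4) assms(1,6) by auto
  ultimately have "Min P0 \<in> S" unfolding S_def by auto
  then have Sne: "S \<noteq> {}" and Sf: "finite S" unfolding S_def using f0 by auto
  define a where "a = Max S"
  have a: "a \<in> P0" "a \<le> s" using Max_in[OF Sf Sne] unfolding a_def S_def by auto
  have aM: "a < Max P0" using a assms by auto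
  have n: "nxt P0 a \<in> P0" "a < nxt P0 a" using nxt_props[OF f0 a(1) aM] by auto
  have "s < nxt P0 a"
  proof (rule ccontr)
    assume "\<not> s < nxt P0 a"
    then have "nxt P0 a \<in> S" using n unfolding S_def by auto
    then have "nxt P0 a \<le> a" unfolding a_def using Sf by auto
    then show False using n by auto
  qed
  then have "nxt P s \<le> nxt P0 a" using nxt_props(3)[OF assms(1,6,7)] n assms by auto
  then show ?thesis using a aM by auto
qed

lemma partition_MinMax:
  assumes "partition_of a b P"
  shows "finite P" "P \<noteq> {}" "Min P = a" "Max P = b" "a \<le> b"
proof -
  show f: "finite P" "P \<noteq> {}" using assms unfolding partition_of_def by auto
  show "Min P = a" using assms f unfolding partition_of_def by (intro Min_eqI) auto
  show "Max P = b" using assms f unfolding partition_of_def by (intro Max_eqI) auto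
  show "a \<le> b" using assms unfolding partition_of_def by auto
qed

lemma pvar_gsum: "finite P \<Longrightarrow> pvar_sum p f P = gsum (\<lambda>a b. norm (f b - f a) powr p) P"
  unfolding pvar_sum_def using gsum_list[where g = "\<lambda>a b. norm (f b - f a) powr p"] by simp

lemma fwd_gsum: "finite P \<Longrightarrow> fwd_sum x y P = gsum (\<lambda>a b. blinfun_apply (x a) (y b - y a)) P"
  unfolding fwd_sum_def using gsum_list[where g = "\<lambda>a b. blinfun_apply (x a) (y b - y a)"] by simp

lemma bwd_gsum: "finite P \<Longrightarrow> bwd_sum x y P = gsum (\<lambda>a b. blinfun_apply (x b) (y b - y a)) P"
  unfolding bwd_sum_def using gsum_list[where g = "\<lambda>a b. blinfun_apply (x b) (y b - y a)"] by simp

lemma gsum_diff: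
  fixes f g :: "real \<Rightarrow> real \<Rightarrow> 'a::ab_group_add"
  shows "gsum f P - gsum g P = gsum (\<lambda>a b. f a b - g a b) P"
  unfolding gsum_def by (simp add: sum_subtractf)

lemma gsum_add:
  fixes f g :: "real \<Rightarrow> real \<Rightarrow> 'a::ab_group_add"
  shows "gsum f P + gsum g P = gsum (\<lambda>a b. f a b + g a b) P"
  unfolding gsum_def by (simp add: sum.distrib)

lemma norm_gsum_le: "norm (gsum f P) \<le> gsum (\<lambda>a b. norm (f a b)) P"
  unfolding gsum_def by (rule norm_sum)

lemma gsum_mono:
  fixes f g :: "real \<Rightarrow> real \<Rightarrow> real"
  assumes "finite P" "\<And>s. s \<in> P \<Longrightarrow> s < Max P \<Longrightarrow> f s (nxt P s) \<le> g s (nxt P s)"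
  shows "gsum f P \<le> gsum g P"
  unfolding gsum_def using assms by (intro sum_mono) auto

lemma gsum_nonneg:
  fixes f :: "real \<Rightarrow> real \<Rightarrow> real"
  assumes "\<And>s. s \<in> P \<Longrightarrow> s < Max P \<Longrightarrow> 0 \<le> f s (nxt P s)"
  shows "0 \<le> gsum f P"
  unfolding gsum_def using assms by (intro sum_nonneg) auto



lemma gsum_sub_interval:
  fixes g :: "real \<Rightarrow> real \<Rightarrow> real"
  assumes "finite P" "a \<in> P" "b \<in> P" "a \<le> b" "\<And>s t. 0 \<le> g s t"
  shows "gsum g (P \<inter> {a..b}) \<le> gsum g P"
proof -
  have "gsum g P = gsum g (P \<inter> {..a}) + gsum g (P \<inter> {a..})" by (rule gsum_split[OF assms(1,2)])
  also have "gsum g (P \<inter> {a..}) = gsum g (P \<inter> {a..} \<inter> {..b}) + gsum g (P \<inter> {a..} \<inter> {b..})"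
    using assms by (intro gsum_split) auto
  also have "P \<inter> {a..} \<inter> {..b} = P \<inter> {a..b}" by auto
  finally have e: "gsum g P = gsum g (P \<inter> {..a}) + (gsum g (P \<inter> {a..b}) + gsum g (P \<inter> {a..} \<inter> {b..}))" .
  have "0 \<le> gsum g (P \<inter> {..a})" "0 \<le> gsum g (P \<inter> {a..} \<inter> {b..})"
    using assms(5) by (auto intro!: gsum_nonneg)
  then show ?thesis using e by linarith
qed

lemma pw_gen:
  fixes a b m e al be ka :: real
  assumes "0 \<le> a" "a \<le> m" "0 \<le> b" "b \<le> m" "b \<le> e" "0 \<le> al" "0 \<le> ka" "ka \<le> be"
  shows "a powr al * b powr be \<le> m powr (al + be - ka) * e powr ka"
proof (cases "b = 0")
  case True
  then show ?thesis by (simp add: mult_nonneg_nonneg)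
next
  case False
  then have bpos: "0 < b" using assms by auto
  have "a powr al * b powr be = a powr al * (b powr (be - ka) * b powr ka)"
    by (simp add: powr_add[symmetric])
  also have "\<dots> \<le> m powr al * (m powr (be - ka) * e powr ka)"
  proof (intro mult_mono)
    show "a powr al \<le> m powr al" using assms by (intro powr_mono2) auto
    show "b powr (be - ka) \<le> m powr (be - ka)" using assms by (intro powr_mono2) auto
    show "b powr ka \<le> e powr ka" using assms by (intro powr_mono2) auto
  qed auto
  also have "\<dots> = m powr (al + be - ka) * e powr ka"
    by (simp add: mult.assoc[symmetric] powr_add[symmetric] add_diff_eq)
  finally show ?thesis .
qed

locale young =
  fixes x :: "real \<Rightarrow> ('v::euclidean_space \<Rightarrow>\<^sub>L 'w::euclidean_space)"
    and y :: "real \<Rightarrow> 'v"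
    and p q T :: real
  assumes T: "0 \<le> T" and p: "0 < p" and q: "0 < q" and pq: "1 / p + 1 / q > 1"
    and fx: "finite_pvar p 0 T x" and fy: "finite_pvar q 0 T y"
begin

definition vs :: "real set \<Rightarrow> real" where
  "vs P = pvar_sum p x P + pvar_sum q y P"

definition om :: "real \<Rightarrow> real \<Rightarrow> real" where
  "om a b = Sup (vs ` {P. partition_of a b P})"

definition "al = 1 / p"
definition "be = 1 / q"
definition "th = al + be"
definition "ka = min (min al be) ((th - 1) / 2)"
definition "th' = th - ka"

lemma params: "0 < al" "0 < be" "1 < th" "0 < ka" "ka \<le> al" "ka \<le> be" "1 < th'" "th' \<le> th"
proof -
  show a: "0 < al" "0 < be" using p q unfolding al_def be_def by auto
  show t: "1 < th" using pq unfolding al_def be_def th_def by auto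
  show k: "0 < ka" "ka \<le> al" "ka \<le> be" using a t unfolding ka_def by auto
  have "ka \<le> (th - 1) / 2" unfolding ka_def by (rule min.cobounded2)
  then show "1 < th'" "th' \<le> th" using t k unfolding th'_def by auto
qed

lemma vs_nonneg: "finite P \<Longrightarrow> 0 \<le> vs P"
  unfolding vs_def by (auto simp: pvar_gsum intro!: add_nonneg_nonneg gsum_nonneg)

lemma vs_gsum: "finite P \<Longrightarrow> vs P = gsum (\<lambda>a b. norm (x b - x a) powr p + norm (y b - y a) powr q) P"
  unfolding vs_def by (simp add: pvar_gsum gsum_add)

definition "Mx = (SOME M. \<forall>P. partition_of 0 T P \<longrightarrow> pvar_sum p x P \<le> M)"
definition "My = (SOME M. \<forall>P. partition_of 0 T P \<longrightarrow> pvar_sum q y P \<le> M)"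

lemma Mx: "partition_of 0 T P \<Longrightarrow> pvar_sum p x P \<le> Mx"
  using someI_ex[OF fx[unfolded finite_pvar_def]] unfolding Mx_def by blast
lemma My: "partition_of 0 T P \<Longrightarrow> pvar_sum q y P \<le> My"
  using someI_ex[OF fy[unfolded finite_pvar_def]] unfolding My_def by blast

lemma vs_bound:
  assumes "partition_of a b P" "0 \<le> a" "b \<le> T"
  shows "vs P \<le> Mx + My"
proof -
  note pm = partition_MinMax[OF assms(1)]
  define P' where "P' = P \<union> {0, T}"
  have P': "partition_of 0 T P'"
  proof -
    have "P \<subseteq> {a..b}" "finite P" using assms(1) unfolding partition_of_def by auto
    then show ?thesis using assms(2,3) T unfolding P'_def partition_of_def by auto
  qed
  have fP': "finite P'" using P' unfolding partition_of_def by auto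
  have sub: "P' \<inter> {a..b} = P"
  proof
    show "P \<subseteq> P' \<inter> {a..b}" using assms(1) unfolding P'_def partition_of_def by auto
    show "P' \<inter> {a..b} \<subseteq> P"
    proof
      fix u assume u: "u \<in> P' \<inter> {a..b}"
      show "u \<in> P"
      proof (cases "u \<in> P")
        case False
        then have "u = 0 \<or> u = T" using u unfolding P'_def by auto
        then have "u = a \<or> u = b" using u assms by auto
        then show ?thesis using assms(1) unfolding partition_of_def by auto
      qed
    qed
  qed
  have ab: "a \<in> P'" "b \<in> P'" using assms(1) unfolding P'_def partition_of_def by auto
  have "pvar_sum p x P = gsum (\<lambda>a b. norm (x b - x a) powr p) (P' \<inter> {a..b})"
    using pm sub by (simp add: pvar_gsum)
  also have "\<dots> \<le> gsum (\<lambda>a b. norm (x b - x a) powr p) P'"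
    using fP' ab pm by (intro gsum_sub_interval) auto
  also have "\<dots> \<le> Mx" using Mx[OF P'] fP' by (simp add: pvar_gsum)
  finally have 1: "pvar_sum p x P \<le> Mx" .
  have "pvar_sum q y P = gsum (\<lambda>a b. norm (y b - y a) powr q) (P' \<inter> {a..b})"
    using pm sub by (simp add: pvar_gsum)
  also have "\<dots> \<le> gsum (\<lambda>a b. norm (y b - y a) powr q) P'"
    using fP' ab pm by (intro gsum_sub_interval) auto
  also have "\<dots> \<le> My" using My[OF P'] fP' by (simp add: pvar_gsum)
  finally have 2: "pvar_sum q y P \<le> My" .
  show ?thesis using 1 2 unfolding vs_def by simp
qed

lemma part_two: "a \<le> b \<Longrightarrow> partition_of a b {a, b}"
  unfolding partition_of_def by auto

lemma om_upper:
  assumes "partition_of a b P" "0 \<le> a" "b \<le> T"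
  shows "vs P \<le> om a b"
  unfolding om_def
proof (rule cSup_upper)
  show "vs P \<in> vs ` {P. partition_of a b P}" using assms by auto
  show "bdd_above (vs ` {P. partition_of a b P})"
    using vs_bound assms by (intro bdd_aboveI[of _ "Mx + My"]) auto
qed

lemma om_least:
  assumes "a \<le> b" "\<And>P. partition_of a b P \<Longrightarrow> vs P \<le> M"
  shows "om a b \<le> M"
  unfolding om_def using assms part_two[OF assms(1)] by (intro cSup_least) auto

lemma om_nonneg: "0 \<le> a \<Longrightarrow> a \<le> b \<Longrightarrow> b \<le> T \<Longrightarrow> 0 \<le> om a b"
  using om_upper[OF part_two] vs_nonneg[of "{a,b}"] by (meson finite.emptyI finite.insertI order_trans)

lemma om_le_W: "0 \<le> a \<Longrightarrow> a \<le> b \<Longrightarrow> b \<le> T \<Longrightarrow> om a b \<le> Mx + My"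
  using vs_bound by (intro om_least) auto

lemma om_superadd:
  assumes "0 \<le> a" "a \<le> c" "c \<le> b" "b \<le> T"
  shows "om a c + om c b \<le> om a b"
proof -
  have key: "vs P1 + vs P2 \<le> om a b" if P1: "partition_of a c P1" and P2: "partition_of c b P2" for P1 P2
  proof -
    have f: "finite (P1 \<union> P2)" using P1 P2 unfolding partition_of_def by auto
    have c: "c \<in> P1 \<union> P2" using P1 unfolding partition_of_def by auto
    have e1: "(P1 \<union> P2) \<inter> {..c} = P1" using P1 P2 unfolding partition_of_def by auto
    have e2: "(P1 \<union> P2) \<inter> {c..} = P2" using P1 P2 unfolding partition_of_def by auto
    have "vs (P1 \<union> P2) = vs P1 + vs P2"
      using gsum_split[OF f c] e1 e2 f P1 P2 unfolding partition_of_def by (simp add: vs_gsum)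
    moreover have "partition_of a b (P1 \<union> P2)" using P1 P2 assms unfolding partition_of_def by auto
    ultimately show ?thesis using om_upper assms by fastforce
  qed
  have "om a c \<le> om a b - om c b"
  proof (rule om_least[OF assms(2)])
    fix P1 assume P1: "partition_of a c P1"
    have "om c b \<le> om a b - vs P1"
    proof (rule om_least[OF assms(3)])
      fix P2 assume "partition_of c b P2"
      then show "vs P2 \<le> om a b - vs P1" using key[OF P1] by fastforce
    qed
    then show "vs P1 \<le> om a b - om c b" by simp
  qed
  then show ?thesis by simp
qed

lemma om_mono:
  assumes "0 \<le> a" "a \<le> u" "u \<le> v" "v \<le> b" "b \<le> T"
  shows "om u v \<le> om a b"
proof -
  have "om a u + om u b \<le> om a b" using assms by (intro om_superadd) auto
  moreover have "om u v + om v b \<le> om u b" using assms by (intro om_superadd) auto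
  moreover have "0 \<le> om a u" "0 \<le> om v b" using assms by (auto intro: om_nonneg)
  ultimately show ?thesis by linarith
qed

lemma incr_x_p: assumes "0 \<le> u" "u \<le> v" "v \<le> T" shows "norm (x v - x u) powr p \<le> om u v"
proof (cases "u = v")
  case True then show ?thesis using om_nonneg assms by simp
next
  case False
  then have "u < v" using assms by auto
  have "norm (x v - x u) powr p \<le> vs {u, v}"
    using gsum_two[OF \<open>u < v\<close>] unfolding vs_def
    by (simp add: pvar_gsum gsum_two[OF \<open>u < v\<close>])
  also have "\<dots> \<le> om u v" using assms by (intro om_upper part_two) auto
  finally show ?thesis .
qed

lemma incr_y_q: assumes "0 \<le> u" "u \<le> v" "v \<le> T" shows "norm (y v - y u) powr q \<le> om u v"
proof (cases "u = v")
  case True then show ?thesis using om_nonneg assms by simp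
next
  case False
  then have "u < v" using assms by auto
  have "norm (y v - y u) powr q \<le> vs {u, v}"
    unfolding vs_def by (simp add: pvar_gsum gsum_two[OF \<open>u < v\<close>])
  also have "\<dots> \<le> om u v" using assms by (intro om_upper part_two) auto
  finally show ?thesis .
qed

lemma root_le: fixes n r w :: real assumes "0 \<le> n" "n powr r \<le> w" "0 < r" shows "n \<le> w powr (1 / r)"
proof -
  have r1: "r * (1 / r) = 1" using assms by simp
  have "n = (n powr r) powr (1 / r)" unfolding powr_powr r1 using assms by simp
  also have "\<dots> \<le> w powr (1 / r)" using assms by (intro powr_mono2) auto
  finally show ?thesis .
qed

lemma incr_x: "0 \<le> u \<Longrightarrow> u \<le> v \<Longrightarrow> v \<le> T \<Longrightarrow> norm (x v - x u) \<le> om u v powr al"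
  unfolding al_def using root_le[OF _ incr_x_p p] by auto

lemma incr_y: "0 \<le> u \<Longrightarrow> u \<le> v \<Longrightarrow> v \<le> T \<Longrightarrow> norm (y v - y u) \<le> om u v powr be"
  unfolding be_def using root_le[OF _ incr_y_q q] by auto

lemma gsum_om_le:
  assumes "finite P" "P \<noteq> {}" "P \<subseteq> {0..T}"
  shows "gsum om P \<le> om (Min P) (Max P)"
  using assms by (intro gsum_le_superadd[where lo = 0 and hi = T]) (auto intro: om_superadd om_nonneg)

definition phi :: "real \<Rightarrow> real \<Rightarrow> real" where
  "phi a b = a powr al * b powr be + a powr be * b powr al"

lemma phi_bound:
  assumes "0 \<le> a" "a \<le> m" "0 \<le> b" "b \<le> m" "min a b \<le> e"
  shows "phi a b \<le> 2 * (m powr th' * e powr ka)"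
proof -
  note pr = params
  have th'e: "th' = al + be - ka" "th' = be + al - ka" unfolding th'_def th_def by auto
  show ?thesis
  proof (cases "b \<le> e")
    case True
    have "a powr al * b powr be \<le> m powr th' * e powr ka"
      unfolding th'e(1) using assms True pr by (intro pw_gen) auto
    moreover have "a powr be * b powr al \<le> m powr th' * e powr ka"
      unfolding th'e(2) using assms True pr by (intro pw_gen) auto
    ultimately show ?thesis unfolding phi_def by simp
  next
    case False
    then have ae: "a \<le> e" using assms by auto
    have "b powr be * a powr al \<le> m powr th' * e powr ka"
      unfolding th'e(2) using assms ae pr by (intro pw_gen) auto
    moreover have "b powr al * a powr be \<le> m powr th' * e powr ka"
      unfolding th'e(1) using assms ae pr by (intro pw_gen) auto
    ultimately show ?thesis unfolding phi_def by (simp add: mult.commute)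
  qed
qed

lemma phi_mono:
  assumes "0 \<le> a" "a \<le> a'" "0 \<le> b" "b \<le> b'"
  shows "phi a b \<le> phi a' b'"
  unfolding phi_def using assms params
  by (intro add_mono mult_mono powr_mono2) auto

end



context young
begin

lemma om_nxt_nonneg: "finite P \<Longrightarrow> P \<subseteq> {0..T} \<Longrightarrow> s \<in> P \<Longrightarrow> s < Max P \<Longrightarrow> 0 \<le> om s (nxt P s)"
  using nxt_props[of P s] by (intro om_nonneg) auto

lemma exists_good_removal:
  assumes P: "finite P" "P \<subseteq> {0..T}" "3 \<le> card P"
  shows "\<exists>s\<in>P. s < Max P \<and> nxt P s < Max P \<and>
     om s (nxt P s) + om (nxt P s) (nxt P (nxt P s)) \<le> 2 * om (Min P) (Max P) / real (card P - 2)"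
proof -
  have Pne: "P \<noteq> {}" using P by auto
  let ?b = "Max P"
  define K where "K = {s\<in>P. s < ?b \<and> nxt P s < ?b}"
  define m where "m s = om s (nxt P s) + om (nxt P s) (nxt P (nxt P s))" for s
  have ne1: "P - {?b} \<noteq> {}"
  proof
    assume "P - {?b} = {}"
    then have "P \<subseteq> {?b}" by auto
    then have "card P \<le> 1" using card_mono[of "{?b}" P] by auto
    then show False using P by auto
  qed
  note mr = max_remove[OF P(1) ne1]
  let ?b' = "Max (P - {?b})"
  have sub: "P - {?b, ?b'} \<subseteq> K"
  proof
    fix s assume s: "s \<in> P - {?b, ?b'}"
    then have "s \<le> ?b'" using mr(3) by blast
    then have sb': "s < ?b'" using s by auto
    then have sb: "s < ?b" using mr by auto
    have "nxt P s \<le> ?b'" using nxt_props(3)[OF P(1) _ sb, of ?b'] s sb' mr by auto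
    then show "s \<in> K" unfolding K_def using s sb mr by auto
  qed
  have fK: "finite K" unfolding K_def using P by auto
  have cardK: "card P - 2 \<le> card K"
  proof -
    have "card (P - {?b, ?b'}) = card P - 2"
      using mr Max_in[OF P(1) Pne] P(1) by (subst card_Diff_subset) auto
    then show ?thesis using card_mono[OF fK sub] by simp
  qed
  then have Kne: "K \<noteq> {}" using P fK by auto
  have sum1: "(\<Sum>s\<in>K. om s (nxt P s)) \<le> gsum om P"
    unfolding gsum_def K_def using P om_nxt_nonneg[OF P(1,2)]
    by (intro sum_mono2) auto
  have inj: "inj_on (nxt P) K"
    using bij_betw_imp_inj_on[OF nxt_bij[OF P(1)]] unfolding K_def by (rule inj_on_subset) auto
  have sum2: "(\<Sum>s\<in>K. om (nxt P s) (nxt P (nxt P s))) \<le> gsum om P"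
  proof -
    have "(\<Sum>s\<in>K. om (nxt P s) (nxt P (nxt P s))) = (\<Sum>c\<in>nxt P ` K. om c (nxt P c))"
      by (simp add: sum.reindex[OF inj])
    also have "\<dots> \<le> gsum om P"
      unfolding gsum_def using P om_nxt_nonneg[OF P(1,2)] nxt_props(1)[OF P(1)]
      by (intro sum_mono2) (auto simp: K_def)
    finally show ?thesis .
  qed
  have "(\<Sum>s\<in>K. m s) \<le> 2 * om (Min P) (Max P)"
    using sum1 sum2 gsum_om_le[OF P(1) Pne P(2)] unfolding m_def sum.distrib by linarith
  have "Min (m ` K) \<in> m ` K" using fK Kne by (intro Min_in) auto
  then obtain s0 where s00: "s0 \<in> K" "m s0 = Min (m ` K)" by auto
  have s0: "s0 \<in> K" "\<And>s. s \<in> K \<Longrightarrow> m s0 \<le> m s"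
    using s00 fK by auto
  have "real (card K) * m s0 \<le> (\<Sum>s\<in>K. m s)"
    using sum_bounded_below[of K "m s0" m] s0 by simp
  also have "\<dots> \<le> 2 * om (Min P) (Max P)"
    using sum1 sum2 gsum_om_le[OF P(1) Pne P(2)] unfolding m_def sum.distrib by linarith
  finally have A: "real (card K) * m s0 \<le> 2 * om (Min P) (Max P)" .
  have ms0: "0 \<le> m s0"
  proof -
    have s0P: "s0 \<in> P" "s0 < ?b" "nxt P s0 < ?b" using s0 unfolding K_def by auto
    have "nxt P s0 \<in> P" using nxt_props(1)[OF P(1) s0P(1,2)] .
    then show ?thesis unfolding m_def using om_nxt_nonneg[OF P(1,2)] s0P by (simp add: add_nonneg_nonneg)
  qed
  have pos: "0 < real (card P - 2)" using P by auto
  have "real (card P - 2) * m s0 \<le> real (card K) * m s0"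
    using cardK ms0 by (intro mult_right_mono) auto
  then have "real (card P - 2) * m s0 \<le> 2 * om (Min P) (Max P)" using A by linarith
  then have "m s0 \<le> 2 * om (Min P) (Max P) / real (card P - 2)"
    using pos by (simp add: field_simps)
  then show ?thesis using s0 unfolding K_def m_def by auto
qed

definition goodI :: "real \<Rightarrow> real \<Rightarrow> real \<Rightarrow> bool" where
  "goodI e a b \<longleftrightarrow> (\<forall>u v. a < u \<and> u \<le> v \<and> v \<le> b \<longrightarrow> om u v \<le> e) \<or>
                    (\<forall>u v. a \<le> u \<and> u \<le> v \<and> v < b \<longrightarrow> om u v \<le> e)"

definition H :: "nat \<Rightarrow> real" where
  "H n = (\<Sum>k=1..n. (1 / real k) powr th')"

lemma H_Suc: "H (Suc n) = H n + (1 / real (Suc n)) powr th'"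
  unfolding H_def by simp

lemma H_nonneg: "0 \<le> H n"
  unfolding H_def by (auto intro: sum_nonneg)

lemma young_removal:
  fixes Xi :: "real \<Rightarrow> real \<Rightarrow> 'a::real_normed_vector"
  assumes defect: "\<And>v u w. 0 \<le> v \<Longrightarrow> v \<le> u \<Longrightarrow> u \<le> w \<Longrightarrow> w \<le> T \<Longrightarrow>
       norm (Xi v w - Xi v u - Xi u w) \<le> phi (om v u) (om u w)"
    and diag: "\<And>a. Xi a a = 0"
    and P: "finite P" "P \<noteq> {}" "P \<subseteq> {0..T}" and g: "goodI e (Min P) (Max P)" and e: "0 \<le> e"
  shows "norm (gsum Xi P - Xi (Min P) (Max P)) \<le> 2 * (e powr ka * (2 * om (Min P) (Max P)) powr th') * H (card P - 2)"
proof -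
  have "\<And>P. card P = n \<Longrightarrow> finite P \<Longrightarrow> P \<noteq> {} \<Longrightarrow> P \<subseteq> {0..T} \<Longrightarrow> goodI e (Min P) (Max P) \<Longrightarrow>
      norm (gsum Xi P - Xi (Min P) (Max P)) \<le> 2 * (e powr ka * (2 * om (Min P) (Max P)) powr th') * H (card P - 2)" for n
  proof (induction n rule: less_induct)
    case (less n P)
    let ?a = "Min P" let ?b = "Max P"
    have aP: "?a \<in> P" and bP: "?b \<in> P" using less.prems by auto
    have ab: "?a \<le> ?b" using less.prems by auto
    have om_ab: "0 \<le> om ?a ?b" using less.prems aP bP ab by (intro om_nonneg) auto
    have RHS0: "0 \<le> 2 * (e powr ka * (2 * om ?a ?b) powr th') * H (card P - 2)"
      using H_nonneg by (auto intro!: mult_nonneg_nonneg)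
    show ?case
    proof (cases "card P \<le> 2")
      case True
      have "card P \<noteq> 0" using less.prems by auto
      then have "card P = 1 \<or> card P = 2" using True by linarith
      then consider "card P = 1" | "card P = 2" by blast
      then show ?thesis
      proof cases
        case 1
        then obtain a where "P = {a}" using card_1_singletonE by blast
        then show ?thesis using RHS0 diag by simp
      next
        case 2
        then obtain a b where Pab: "P = {a, b}" "a \<noteq> b" by (meson card_2_iff)
        then have "P = {min a b, max a b}" "min a b < max a b" by (auto simp: min_def max_def)
        then have "gsum Xi P = Xi (min a b) (max a b)" "?a = min a b" "?b = max a b"
          using gsum_two by auto
        then show ?thesis using RHS0 by simp
      qed
    next
      case False
      then have c3: "3 \<le> card P" by simp
      obtain s where s: "s \<in> P" "s < ?b" "nxt P s < ?b"
        and ms: "om s (nxt P s) + om (nxt P s) (nxt P (nxt P s)) \<le> 2 * om ?a ?b / real (card P - 2)"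
        using exists_good_removal[OF less.prems(2) less.prems(4) c3] by blast
      let ?c = "nxt P s" let ?w = "nxt P ?c"
      have c: "?c \<in> P" "s < ?c" using nxt_props[OF less.prems(2) s(1,2)] by auto
      have w: "?w \<in> P" "?c < ?w" using nxt_props[OF less.prems(2) c(1) s(3)] by auto
      have sa: "?a \<le> s" using s less.prems by auto
      have wb: "?w \<le> ?b" using w less.prems by auto
      have T0: "0 \<le> s" "?w \<le> T" using s w less.prems by auto
      define P' where "P' = P - {?c}"
      have rem: "gsum Xi P = gsum Xi P' + (Xi s ?c + Xi ?c ?w - Xi s ?w)"
        unfolding P'_def by (rule gsum_remove[OF less.prems(2) s])
      have cardP': "card P' = card P - 1" unfolding P'_def using c less.prems by auto
      have P'ne: "P' \<noteq> {}" using s c unfolding P'_def by auto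
      have fP': "finite P'" unfolding P'_def using less.prems by auto
      have minP': "Min P' = ?a"
      proof (rule Min_eqI[OF fP'])
        show "?a \<in> P'" unfolding P'_def using aP sa c by auto
      qed (use less.prems in \<open>auto simp: P'_def\<close>)
      have maxP': "Max P' = ?b"
      proof (rule Max_eqI[OF fP'])
        show "?b \<in> P'" unfolding P'_def using bP s by auto
      qed (use less.prems in \<open>auto simp: P'_def\<close>)
      have IH: "norm (gsum Xi P' - Xi ?a ?b) \<le> 2 * (e powr ka * (2 * om ?a ?b) powr th') * H (card P' - 2)"
      proof -
        have lt: "card P' < n" using cardP' less.prems(1) c3 by auto
        have sub': "P' \<subseteq> {0..T}" using less.prems(4) unfolding P'_def by auto
        have g': "goodI e (Min P') (Max P')" using minP' maxP' less.prems(5) by simp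
        show ?thesis using less.IH[OF lt refl fP' P'ne sub' g'] minP' maxP' by simp
      qed
      define m where "m = om s ?c + om ?c ?w"
      have o1: "0 \<le> om s ?c" "0 \<le> om ?c ?w" using T0 c w by (auto intro: om_nonneg)
      have mine: "min (om s ?c) (om ?c ?w) \<le> e"
        using less.prems(5) unfolding goodI_def
      proof
        assume "\<forall>u v. ?a < u \<and> u \<le> v \<and> v \<le> ?b \<longrightarrow> om u v \<le> e"
        then have "om ?c ?w \<le> e" using sa c w wb by auto
        then show ?thesis by simp
      next
        assume "\<forall>u v. ?a \<le> u \<and> u \<le> v \<and> v < ?b \<longrightarrow> om u v \<le> e"
        then have "om s ?c \<le> e" using sa c s by auto
        then show ?thesis by simp
      qed
      have "norm (Xi s ?c + Xi ?c ?w - Xi s ?w) = norm (Xi s ?w - Xi s ?c - Xi ?c ?w)"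
        by (metis minus_diff_eq norm_minus_cancel diff_diff_eq)
      also have "\<dots> \<le> phi (om s ?c) (om ?c ?w)" using T0 c w by (intro defect) auto
      also have "\<dots> \<le> 2 * (m powr th' * e powr ka)"
        using o1 mine unfolding m_def by (intro phi_bound) auto
      finally have st1: "norm (Xi s ?c + Xi ?c ?w - Xi s ?w) \<le> 2 * (m powr th' * e powr ka)" .
      have "m powr th' \<le> (2 * om ?a ?b * (1 / real (card P - 2))) powr th'"
        using ms o1 params unfolding m_def by (intro powr_mono2) auto
      also have "\<dots> = (2 * om ?a ?b) powr th' * (1 / real (card P - 2)) powr th'"
        by (rule powr_mult)
      finally have st2: "m powr th' \<le> (2 * om ?a ?b) powr th' * (1 / real (card P - 2)) powr th'" .
      have "2 * (m powr th' * e powr ka) \<le> 2 * ((2 * om ?a ?b) powr th' * (1 / real (card P - 2)) powr th' * e powr ka)"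
        using st2 by (intro mult_left_mono mult_right_mono) auto
      then have step: "norm (Xi s ?c + Xi ?c ?w - Xi s ?w) \<le>
          2 * (e powr ka * (2 * om ?a ?b) powr th') * (1 / real (card P - 2)) powr th'"
        using st1 by (simp add: mult_ac)
      have Hs: "H (card P - 2) = H (card P' - 2) + (1 / real (card P - 2)) powr th'"
      proof -
        have "card P - 2 = Suc (card P' - 2)" using cardP' c3 by auto
        then show ?thesis by (simp add: H_Suc)
      qed
      have "norm (gsum Xi P - Xi ?a ?b) \<le> norm (gsum Xi P' - Xi ?a ?b) + norm (Xi s ?c + Xi ?c ?w - Xi s ?w)"
        unfolding rem by (rule order_trans[OF _ norm_triangle_ineq]) (simp add: algebra_simps)
      also have "\<dots> \<le> 2 * (e powr ka * (2 * om ?a ?b) powr th') * H (card P' - 2)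
          + 2 * (e powr ka * (2 * om ?a ?b) powr th') * (1 / real (card P - 2)) powr th'"
        using IH step by linarith
      also have "\<dots> = 2 * (e powr ka * (2 * om ?a ?b) powr th') * H (card P - 2)"
        unfolding Hs by (simp add: algebra_simps)
      finally show ?thesis .
    qed
  qed
  then show ?thesis using assms by blast
qed

end



context young
begin

definition "Z = suminf (\<lambda>k. (1 / real (Suc k)) powr th')"

lemma Z_summable: "summable (\<lambda>k. (1 / real (Suc k)) powr th')"
proof -
  have "summable (\<lambda>n. real n powr (- th'))" using params by (subst summable_real_powr_iff) auto
  then have "summable (\<lambda>n. real (Suc n) powr (- th'))" by (subst summable_Suc_iff)
  moreover have "(\<lambda>k. (1 / real (Suc k)) powr th') = (\<lambda>n. real (Suc n) powr (- th'))"
    by (simp add: powr_minus_divide powr_divide)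
  ultimately show ?thesis by simp
qed

lemma H_le_Z: "H n \<le> Z"
proof -
  have "H n = (\<Sum>k<n. (1 / real (Suc k)) powr th')"
    by (induction n) (simp_all add: H_Suc, simp add: H_def)
  also have "\<dots> \<le> Z" unfolding Z_def using Z_summable by (intro sum_le_suminf) auto
  finally show ?thesis .
qed

lemma Z_nonneg: "0 \<le> Z" using H_le_Z[of 0] H_nonneg[of 0] by linarith

lemma pow_le_lin:
  fixes a W r :: real
  assumes "0 \<le> a" "a \<le> W" "1 \<le> r"
  shows "a powr r \<le> W powr (r - 1) * a"
proof (cases "a = 0")
  case True then show ?thesis by simp
next
  case False
  have "a powr r = a powr ((r - 1) + 1)" by simp
  also have "\<dots> = a powr (r - 1) * a powr 1" by (rule powr_add)
  also have "\<dots> = a powr (r - 1) * a" using assms by simp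
  also have "\<dots> \<le> W powr (r - 1) * a" using assms by (intro mult_right_mono powr_mono2) auto
  finally show ?thesis .
qed

definition goodP :: "real \<Rightarrow> real set \<Rightarrow> bool" where
  "goodP e P \<longleftrightarrow> (\<forall>s\<in>P. s < Max P \<longrightarrow> goodI e s (nxt P s))"

lemma goodI_mono: "goodI e a b \<Longrightarrow> a \<le> s \<Longrightarrow> s' \<le> b \<Longrightarrow> goodI e s s'"
  unfolding goodI_def by (metis order.strict_trans1 order.strict_trans2 order.trans)

lemma goodP_refine:
  assumes "partition_of 0 t P0" "partition_of 0 t P" "P0 \<subseteq> P" "goodP e P0"
  shows "goodP e P"
  unfolding goodP_def
proof (intro ballI impI)
  fix s assume s: "s \<in> P" "s < Max P"
  note m0 = partition_MinMax[OF assms(1)] and m = partition_MinMax[OF assms(2)]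
  obtain a where a: "a \<in> P0" "a < Max P0" "a \<le> s" "nxt P s \<le> nxt P0 a"
    using coarse_contain[OF m(1) assms(3) m0(2) _ _ s] m0 m by auto
  have "goodI e a (nxt P0 a)" using assms(4) a unfolding goodP_def by auto
  then show "goodI e s (nxt P s)" by (rule goodI_mono[OF _ a(3) a(4)])
qed

definition "W = om 0 T"

lemma W_nonneg: "0 \<le> W" unfolding W_def using T by (intro om_nonneg) auto

definition "Cst e = 2 * e powr ka * 2 powr th' * Z * W powr th'"

lemma sewing_cauchy:
  fixes Xi :: "real \<Rightarrow> real \<Rightarrow> 'a::real_normed_vector"
  assumes defect: "\<And>v u w. 0 \<le> v \<Longrightarrow> v \<le> u \<Longrightarrow> u \<le> w \<Longrightarrow> w \<le> T \<Longrightarrow>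
       norm (Xi v w - Xi v u - Xi u w) \<le> phi (om v u) (om u w)"
    and diag: "\<And>a. Xi a a = 0"
    and P0: "partition_of 0 t P0" and P: "partition_of 0 t P" and sub: "P0 \<subseteq> P"
    and t: "t \<le> T" and g: "goodP e P0" and e: "0 \<le> e"
  shows "norm (gsum Xi P - gsum Xi P0) \<le> Cst e"
proof -
  note m0 = partition_MinMax[OF P0] and m = partition_MinMax[OF P]
  have P0T: "P0 \<subseteq> {0..T}" and PT: "P \<subseteq> {0..T}" using P0 P t unfolding partition_of_def by auto
  let ?I = "{s\<in>P0. s < Max P0}"
  have "gsum Xi P = (\<Sum>s\<in>?I. gsum Xi (P \<inter> {s..nxt P0 s}))"
    using m m0 sub P unfolding partition_of_def by (intro gsum_coarse) auto
  moreover have "gsum Xi P0 = (\<Sum>s\<in>?I. Xi s (nxt P0 s))" unfolding gsum_def ..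
  ultimately have "gsum Xi P - gsum Xi P0 = (\<Sum>s\<in>?I. gsum Xi (P \<inter> {s..nxt P0 s}) - Xi s (nxt P0 s))"
    by (simp add: sum_subtractf)
  then have "norm (gsum Xi P - gsum Xi P0) \<le> (\<Sum>s\<in>?I. norm (gsum Xi (P \<inter> {s..nxt P0 s}) - Xi s (nxt P0 s)))"
    by (simp add: norm_sum)
  also have "\<dots> \<le> (\<Sum>s\<in>?I. 2 * e powr ka * 2 powr th' * Z * (W powr (th' - 1) * om s (nxt P0 s)))"
  proof (rule sum_mono)
    fix s assume s: "s \<in> ?I"
    let ?s' = "nxt P0 s" let ?Q = "P \<inter> {s..?s'}"
    have s': "?s' \<in> P0" "s < ?s'" using nxt_props[OF m0(1)] s by auto
    have fQ: "finite ?Q" using m by auto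
    have sQ: "s \<in> ?Q" "?s' \<in> ?Q" using s s' sub by auto
    have minQ: "Min ?Q = s" using fQ sQ by (intro Min_eqI) auto
    have maxQ: "Max ?Q = ?s'" using fQ sQ by (intro Max_eqI) auto
    have gQ: "goodI e (Min ?Q) (Max ?Q)" using g s unfolding goodP_def minQ maxQ by auto
    have QT: "?Q \<subseteq> {0..T}" using PT by auto
    have "norm (gsum Xi ?Q - Xi (Min ?Q) (Max ?Q)) \<le> 2 * (e powr ka * (2 * om (Min ?Q) (Max ?Q)) powr th') * H (card ?Q - 2)"
      by (rule young_removal[OF defect diag fQ _ QT gQ e]) (use sQ in auto)
    also have "\<dots> \<le> 2 * (e powr ka * (2 * om s ?s') powr th') * Z"
      unfolding minQ maxQ by (intro mult_left_mono H_le_Z) auto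
    finally have A: "norm (gsum Xi ?Q - Xi s ?s') \<le> 2 * (e powr ka * (2 * om s ?s') powr th') * Z"
      unfolding minQ maxQ .
    have B: "(2 * om s ?s') powr th' = 2 powr th' * om s ?s' powr th'" by (rule powr_mult)
    have C: "om s ?s' powr th' \<le> W powr (th' - 1) * om s ?s'"
    proof (rule pow_le_lin)
      show "0 \<le> om s ?s'" using s s' P0T by (intro om_nonneg) auto
      show "om s ?s' \<le> W" unfolding W_def using s s' P0T by (intro om_mono) auto
      show "1 \<le> th'" using params by auto
    qed
    have "2 * (e powr ka * (2 * om s ?s') powr th') * Z = (2 * e powr ka * 2 powr th' * Z) * om s ?s' powr th'"
      unfolding B by (simp add: mult_ac)
    also have "\<dots> \<le> (2 * e powr ka * 2 powr th' * Z) * (W powr (th' - 1) * om s ?s')"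
      using C Z_nonneg by (intro mult_left_mono) auto
    finally show "norm (gsum Xi ?Q - Xi s ?s') \<le> 2 * e powr ka * 2 powr th' * Z * (W powr (th' - 1) * om s ?s')"
      using A by simp
  qed
  also have "\<dots> = 2 * e powr ka * 2 powr th' * Z * W powr (th' - 1) * gsum om P0"
    unfolding gsum_def by (simp add: sum_distrib_left mult_ac)
  also have "\<dots> \<le> 2 * e powr ka * 2 powr th' * Z * W powr (th' - 1) * W"
  proof (intro mult_left_mono)
    have "gsum om P0 \<le> om (Min P0) (Max P0)" using gsum_om_le[OF m0(1) m0(2) P0T] .
    also have "\<dots> \<le> W" unfolding W_def m0 using m0 t by (intro om_mono) auto
    finally show "gsum om P0 \<le> W" .
  qed (use Z_nonneg in auto)
  also have "\<dots> = Cst e"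
  proof -
    have "W powr (th' - 1) * W = W powr th'"
    proof (cases "W = 0")
      case False
      have "W powr th' = W powr ((th' - 1) + 1)" by simp
      also have "\<dots> = W powr (th' - 1) * W powr 1" by (rule powr_add)
      finally show ?thesis using W_nonneg by simp
    qed simp
    then show ?thesis unfolding Cst_def by (simp add: mult_ac)
  qed
  finally show ?thesis .
qed

end



context young
begin

lemma right_small:
  assumes "0 \<le> r" "0 < e"
  shows "\<exists>d>0. \<forall>u v. r < u \<and> u \<le> v \<and> v < r + d \<and> v \<le> T \<longrightarrow> om u v \<le> e"
proof (rule ccontr)
  assume H: "\<not> ?thesis"
  then have H': "\<And>d. d > 0 \<Longrightarrow> \<exists>u v. r < u \<and> u \<le> v \<and> v < r + d \<and> v \<le> T \<and> e < om u v"
    by (meson not_le)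
  have claim: "\<forall>d. r < d \<longrightarrow> d \<le> T \<longrightarrow> real N * e \<le> om r d" for N
  proof (induction N)
    case 0 then show ?case using assms by (auto intro: om_nonneg)
  next
    case (Suc N)
    show ?case
    proof (intro allI impI)
      fix d assume d: "r < d" "d \<le> T"
      obtain u v where uv: "r < u" "u \<le> v" "v < r + (d - r)" "v \<le> T" "e < om u v"
        using H'[of "d - r"] d by auto
      have "real N * e \<le> om r u" using Suc uv d by auto
      moreover have "om r u + om u d \<le> om r d" using assms uv d by (intro om_superadd) auto
      moreover have "om u v \<le> om u d" using assms uv d by (intro om_mono) auto
      ultimately show "real (Suc N) * e \<le> om r d" using uv by (simp add: algebra_simps)
    qed
  qed
  obtain u v where "r < u" "u \<le> v" "v \<le> T" using H'[of 1] by auto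
  then have rT: "r < T" by auto
  obtain N :: nat where N: "(Mx + My) / e < real N" using reals_Archimedean2 by blast
  have "real N * e \<le> om r T" using claim rT by auto
  moreover have "om r T \<le> Mx + My" using assms rT by (intro om_le_W) auto
  moreover have "Mx + My < real N * e" using N assms by (simp add: field_simps)
  ultimately show False by linarith
qed

lemma left_small:
  assumes "r \<le> T" "0 < e"
  shows "\<exists>d>0. \<forall>u v. r - d < u \<and> u \<le> v \<and> v < r \<and> 0 \<le> u \<longrightarrow> om u v \<le> e"
proof (rule ccontr)
  assume H: "\<not> ?thesis"
  then have H': "\<And>d. d > 0 \<Longrightarrow> \<exists>u v. r - d < u \<and> u \<le> v \<and> v < r \<and> 0 \<le> u \<and> e < om u v"
    by (meson not_le)
  have claim: "\<forall>d. d < r \<longrightarrow> 0 \<le> d \<longrightarrow> real N * e \<le> om d r" for N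
  proof (induction N)
    case 0 then show ?case using assms by (auto intro: om_nonneg)
  next
    case (Suc N)
    show ?case
    proof (intro allI impI)
      fix d assume d: "d < r" "0 \<le> d"
      obtain u v where uv: "r - (r - d) < u" "u \<le> v" "v < r" "0 \<le> u" "e < om u v"
        using H'[of "r - d"] d by auto
      have "real N * e \<le> om v r" using Suc uv d by auto
      moreover have "om d v + om v r \<le> om d r" using assms uv d by (intro om_superadd) auto
      moreover have "om u v \<le> om d v" using assms uv d by (intro om_mono) auto
      ultimately show "real (Suc N) * e \<le> om d r" using uv by (simp add: algebra_simps)
    qed
  qed
  obtain u v where "0 \<le> u" "u \<le> v" "v < r" using H'[of 1] by auto
  then have r0: "0 < r" by auto
  obtain N :: nat where N: "(Mx + My) / e < real N" using reals_Archimedean2 by blast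
  have "real N * e \<le> om 0 r" using claim r0 by auto
  moreover have "om 0 r \<le> Mx + My" using assms r0 by (intro om_le_W) auto
  moreover have "Mx + My < real N * e" using N assms by (simp add: field_simps)
  ultimately show False by linarith
qed

lemma goodP_concat:
  assumes P1: "partition_of a c P1" and P2: "partition_of c b P2" and g1: "goodP e P1" and g2: "goodP e P2"
  shows "goodP e (P1 \<union> P2)"
  unfolding goodP_def
proof (intro ballI impI)
  fix s assume s: "s \<in> P1 \<union> P2" "s < Max (P1 \<union> P2)"
  note m1 = partition_MinMax[OF P1] and m2 = partition_MinMax[OF P2]
  have f: "finite (P1 \<union> P2)" using m1 m2 by auto
  have P1s: "P1 \<subseteq> {a..c}" and P2s: "P2 \<subseteq> {c..b}" using P1 P2 unfolding partition_of_def by auto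
  have cin: "c \<in> P1" "c \<in> P2" using P1 P2 unfolding partition_of_def by auto
  have nx: "nxt (P1 \<union> P2) s \<in> P1 \<union> P2" "s < nxt (P1 \<union> P2) s"
    using nxt_props[OF f s] by auto
  show "goodI e s (nxt (P1 \<union> P2) s)"
  proof (cases "s < c")
    case True
    have sP1: "s \<in> P1" using s True P2s by auto
    have "nxt (P1 \<union> P2) s \<le> c" using nxt_props(3)[OF f s, of c] cin True by auto
    then have "nxt (P1 \<union> P2) s \<in> P1" using nx P2s cin by auto
    then have eq: "nxt P1 s = nxt (P1 \<union> P2) s" using nxt_subset[OF f _ sP1 s(2)] by auto
    have "s < Max P1" using True m1 by simp
    then show ?thesis using g1 sP1 eq unfolding goodP_def by auto
  next
    case False
    have sP2: "s \<in> P2" using s False P1s cin by auto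
    have "nxt (P1 \<union> P2) s \<in> P2" using nx P1s False by auto
    then have eq: "nxt P2 s = nxt (P1 \<union> P2) s" using nxt_subset[OF f _ sP2 s(2)] by auto
    have bP2: "b \<in> P2" using P2 unfolding partition_of_def by auto
    have cb: "c \<le> b" using m2 by auto
    have "\<forall>z\<in>P1 \<union> P2. z \<le> b" using P1s P2s cb by auto
    then have "Max (P1 \<union> P2) = b" using bP2 f by (intro Max_eqI) auto
    then have "s < Max P2" using s m2 by simp
    then show ?thesis using g2 sP2 eq unfolding goodP_def by auto
  qed
qed

lemma goodP_two:
  assumes "a < b" "goodI e a b" shows "goodP e {a, b}"
proof -
  have "Max {a,b} = b" using assms by auto
  moreover have "nxt {a,b} a = b" using assms by (intro nxt_eqI) auto
  ultimately show ?thesis using assms unfolding goodP_def by auto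
qed

lemma goodP_single: "goodP e {a}"
  unfolding goodP_def by auto

lemma partition_concat:
  assumes "partition_of a c P1" "partition_of c b P2" shows "partition_of a b (P1 \<union> P2)"
proof -
  have h: "finite P1" "finite P2" "P1 \<subseteq> {a..c}" "P2 \<subseteq> {c..b}" "a \<in> P1" "c \<in> P1" "c \<in> P2" "b \<in> P2"
    using assms unfolding partition_of_def by auto
  then have "a \<le> c" "c \<le> b" by auto
  then have "P1 \<union> P2 \<subseteq> {a..b}" using h(3,4) by auto
  then show ?thesis using h unfolding partition_of_def by auto
qed

lemma good_partition_exists:
  assumes "0 \<le> t" "t \<le> T" "0 < e"
  shows "\<exists>P. partition_of 0 t P \<and> goodP e P"
proof (cases "t = 0")
  case True
  then show ?thesis using goodP_single[of e 0] unfolding partition_of_def by auto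
next
  case False
  then have t0: "0 < t" using assms by auto
  define dR where "dR r = (SOME d. d > 0 \<and> (\<forall>u v. r < u \<and> u \<le> v \<and> v < r + d \<and> v \<le> T \<longrightarrow> om u v \<le> e))" for r
  define dL where "dL r = (SOME d. d > 0 \<and> (\<forall>u v. r - d < u \<and> u \<le> v \<and> v < r \<and> 0 \<le> u \<longrightarrow> om u v \<le> e))" for r
  have dR: "dR r > 0 \<and> (\<forall>u v. r < u \<and> u \<le> v \<and> v < r + dR r \<and> v \<le> T \<longrightarrow> om u v \<le> e)" if "0 \<le> r" for r
    unfolding dR_def by (rule someI_ex[OF right_small[OF that assms(3)]])
  have dL: "dL r > 0 \<and> (\<forall>u v. r - dL r < u \<and> u \<le> v \<and> v < r \<and> 0 \<le> u \<longrightarrow> om u v \<le> e)" if "r \<le> T" for r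
    unfolding dL_def by (rule someI_ex[OF left_small[OF that assms(3)]])
  define d where "d r = min (dR r) (dL r)" for r
  have dpos: "d r > 0" if "r \<in> {0..t}" for r using dR dL that assms unfolding d_def by auto
  define C where "C = (\<lambda>r. ball r (d r)) ` {0..t}"
  obtain lam where lam: "0 < lam" "\<And>S. S \<subseteq> {0..t} \<Longrightarrow> diameter S < lam \<Longrightarrow> \<exists>B\<in>C. S \<subseteq> B"
  proof (rule Lebesgue_number_lemma[of "{0..t}" C])
    show "compact {0..t}" by simp
    show "C \<noteq> {}" unfolding C_def using assms by auto
    show "{0..t} \<subseteq> \<Union> C" unfolding C_def using dpos by force
    show "\<And>B. B \<in> C \<Longrightarrow> open B" unfolding C_def by auto
  qed blast
  obtain N :: nat where N: "t / lam < real N" using reals_Archimedean2 by blast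
  have Npos: "0 < N" using N t0 lam by (metis divide_pos_pos gr0I less_le_trans of_nat_0 order.strict_iff_not)
  define g where "g k = real k * t / real N" for k
  have g_step: "g k < g (Suc k)" for k unfolding g_def using t0 Npos by (simp add: field_simps)
  have gN: "g N = t" unfolding g_def using Npos by simp
  have g0: "g 0 = 0" unfolding g_def by simp
  have g_le: "g k \<le> t" if "k \<le> N" for k unfolding g_def using that t0 Npos by (simp add: field_simps)
  have g_nonneg: "0 \<le> g k" for k unfolding g_def using t0 by simp
  have cell: "\<exists>Q. partition_of (g k) (g (Suc k)) Q \<and> goodP e Q" if k: "Suc k \<le> N" for k
  proof -
    let ?a = "g k" let ?b = "g (Suc k)"
    have sub: "{?a..?b} \<subseteq> {0..t}" using g_le[OF k] g_nonneg by auto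
    have "?b - ?a = t / real N" unfolding g_def by (simp add: diff_divide_distrib[symmetric] algebra_simps)
    then have "diameter {?a..?b} = t / real N" using g_step[of k] by simp
    also have "\<dots> < lam" using N lam Npos by (simp add: field_simps)
    finally obtain r where r: "r \<in> {0..t}" "{?a..?b} \<subseteq> ball r (d r)"
      using lam(2)[OF sub] unfolding C_def by auto
    have ab: "?a < ?b" by (rule g_step)
    have bT: "?b \<le> T" using g_le[OF k] assms by auto
    have a0: "0 \<le> ?a" by (rule g_nonneg)
    have "?a \<in> {?a..?b}" "?b \<in> {?a..?b}" using ab by auto
    then have "?a \<in> ball r (d r)" "?b \<in> ball r (d r)" using r(2) by (auto simp del: mem_ball)
    then have ra: "r - d r < ?a" and rb: "?b < r + d r"
      by (auto simp: dist_real_def abs_less_iff)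
    have rT: "0 \<le> r" "r \<le> T" using r assms by auto
    note R = dR[OF rT(1)] and L = dL[OF rT(2)]
    have dd: "d r \<le> dR r" "d r \<le> dL r" unfolding d_def by auto
    have rightI: "goodI e s s'" if "r \<le> s" "s' \<le> ?b" for s s'
      unfolding goodI_def using R that rb dd bT by (intro disjI1 allI impI) auto
    have leftI: "goodI e s s'" if "?a \<le> s" "s' \<le> r" for s s'
      unfolding goodI_def using L that ra dd a0 by (intro disjI2 allI impI) auto
    consider "r \<le> ?a" | "?b \<le> r" | "?a < r \<and> r < ?b" by linarith
    then show ?thesis
    proof cases
      case 1
      then show ?thesis using goodP_two[OF ab rightI[OF 1 order.refl]] part_two[of ?a ?b] ab by auto
    next
      case 2
      then show ?thesis using goodP_two[OF ab leftI[OF order.refl 2]] part_two[of ?a ?b] ab by auto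
    next
      case 3
      have g1: "goodP e {?a, r}" using goodP_two[of ?a r] leftI[of ?a r] 3 by auto
      have g2: "goodP e {r, ?b}" using goodP_two[of r ?b] rightI[of r ?b] 3 by auto
      have p1: "partition_of ?a r {?a, r}" and p2: "partition_of r ?b {r, ?b}" using 3 part_two by auto
      show ?thesis using goodP_concat[OF p1 p2 g1 g2] partition_concat[OF p1 p2] by blast
    qed
  qed
  have "\<exists>P. partition_of 0 (g k) P \<and> goodP e P" if "k \<le> N" for k
    using that
  proof (induction k)
    case 0
    then show ?case using goodP_single[of e 0] g0 unfolding partition_of_def by auto
  next
    case (Suc k)
    then obtain P where P: "partition_of 0 (g k) P" "goodP e P" by auto
    obtain Q where Q: "partition_of (g k) (g (Suc k)) Q" "goodP e Q" using cell Suc by blast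
    show ?case using goodP_concat[OF P(1) Q(1) P(2) Q(2)] partition_concat[OF P(1) Q(1)] by blast
  qed
  then show ?thesis using gN by (metis order.refl)
qed

end



lemma rrs_cauchy:
  fixes S :: "real set \<Rightarrow> 'a::banach"
  assumes C: "\<And>e. e > 0 \<Longrightarrow> \<exists>P0. partition_of 0 t P0 \<and> (\<forall>P. partition_of 0 t P \<and> P0 \<subseteq> P \<longrightarrow> norm (S P - S P0) \<le> e)"
  shows "\<exists>I. RRS_has_limit S t I"
proof -
  have "\<forall>n. \<exists>P0. partition_of 0 t P0 \<and> (\<forall>P. partition_of 0 t P \<and> P0 \<subseteq> P \<longrightarrow> norm (S P - S P0) \<le> 1 / real (Suc n))"
    using C by auto
  then obtain f where f: "\<And>n. partition_of 0 t (f n)"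
    "\<And>n P. partition_of 0 t P \<Longrightarrow> f n \<subseteq> P \<Longrightarrow> norm (S P - S (f n)) \<le> 1 / real (Suc n)"
    by metis
  define Q where "Q n = (\<Union>k\<le>n. f k)" for n
  have Qp: "partition_of 0 t (Q n)" for n
    using f(1) unfolding Q_def partition_of_def by auto
  have Qsub: "f n \<subseteq> Q m" if "n \<le> m" for n m unfolding Q_def using that by (intro UN_upper) auto
  define a where "a n = S (Q n)" for n
  have close: "norm (S P - a n) \<le> 2 / real (Suc n)" if "partition_of 0 t P" "Q n \<subseteq> P" for P n
  proof -
    have "norm (S P - a n) \<le> norm (S P - S (f n)) + norm (S (Q n) - S (f n))"
      unfolding a_def by (rule norm_diff_triangle_le[of _ "S (f n)"]) (simp_all add: norm_minus_commute)
    also have "\<dots> \<le> 1 / real (Suc n) + 1 / real (Suc n)"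
      using f(2)[OF that(1)] f(2)[OF Qp] Qsub[of n n] that(2) by (intro add_mono) auto
    finally show ?thesis by simp
  qed
  have am: "norm (a m - a n) \<le> 2 / real (Suc n)" if "n \<le> m" for m n
  proof -
    have "Q n \<subseteq> Q m" unfolding Q_def using that by (intro UN_mono) auto
    then show ?thesis unfolding a_def[of m] using close[OF Qp] by auto
  qed
  have "Cauchy a"
  proof (rule CauchyI)
    fix e :: real assume e: "0 < e"
    obtain M :: nat where M: "4 / e < real M" using reals_Archimedean2 by blast
    have M4: "4 / real (Suc M) < e" using M e by (simp add: field_simps)
    show "\<exists>M. \<forall>m\<ge>M. \<forall>n\<ge>M. norm (a m - a n) < e"
    proof (intro exI allI impI)
      fix m n assume "M \<le> m" "M \<le> n"
      have "norm (a m - a n) \<le> norm (a m - a M) + norm (a n - a M)"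
        by (rule norm_diff_triangle_le[of _ "a M"]) (simp_all add: norm_minus_commute)
      also have "\<dots> \<le> 2 / real (Suc M) + 2 / real (Suc M)"
        using am \<open>M \<le> m\<close> \<open>M \<le> n\<close> by (intro add_mono) auto
      finally show "norm (a m - a n) < e" using M4 by simp
    qed
  qed
  then obtain L where L: "a \<longlonglongrightarrow> L" using Cauchy_convergent_iff convergent_def by blast
  have aL: "norm (L - a n) \<le> 2 / real (Suc n)" for n
  proof -
    have "(\<lambda>m. norm (a m - a n)) \<longlonglongrightarrow> norm (L - a n)" by (intro tendsto_intros L)
    then show ?thesis using am by (intro Lim_bounded[where M = n]) auto
  qed
  show ?thesis unfolding RRS_has_limit_def
  proof (rule exI[of _ L], intro allI impI)
    fix e :: real assume e: "0 < e"
    obtain n :: nat where n: "4 / e < real n" using reals_Archimedean2 by blast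
    have n4: "4 / real (Suc n) < e" using n e by (simp add: field_simps)
    show "\<exists>P0. partition_of 0 t P0 \<and> (\<forall>P. partition_of 0 t P \<and> P0 \<subseteq> P \<longrightarrow> norm (S P - L) < e)"
    proof (intro exI conjI allI impI)
      show "partition_of 0 t (Q n)" by (rule Qp)
      fix P assume P: "partition_of 0 t P \<and> Q n \<subseteq> P"
      have "norm (S P - L) \<le> norm (S P - a n) + norm (L - a n)"
        by (rule norm_diff_triangle_le[of _ "a n"]) (simp_all add: norm_minus_commute)
      also have "\<dots> \<le> 2 / real (Suc n) + 2 / real (Suc n)"
        using close P aL by (intro add_mono) auto
      finally show "norm (S P - L) < e" using n4 by simp
    qed
  qed
qed

lemma rrs_cong:
  assumes "\<forall>P. partition_of 0 t P \<longrightarrow> S P = S' P"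
  shows "RRS_has_limit S t I = RRS_has_limit S' t I"
  unfolding RRS_has_limit_def using assms by (metis order.refl)

context young
begin

lemma Cst_small:
  assumes "0 < eps" shows "\<exists>e>0. Cst e < eps"
proof -
  define K0 where "K0 = 2 * 2 powr th' * Z * W powr th'"
  have K0: "0 \<le> K0" unfolding K0_def using Z_nonneg W_nonneg by auto
  have CK: "Cst e = K0 * e powr ka" for e unfolding Cst_def K0_def by (simp add: mult_ac)
  show ?thesis
  proof (cases "K0 = 0")
    case True then show ?thesis using assms CK by (intro exI[of _ 1]) auto
  next
    case False
    then have K0p: "0 < K0" using K0 by auto
    define e where "e = (eps / (2 * K0)) powr (1 / ka)"
    have ep: "0 < e" unfolding e_def using assms K0p by auto
    have "e powr ka = eps / (2 * K0)" unfolding e_def using params assms K0p by (simp add: powr_powr)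
    then have "Cst e = eps / 2" unfolding CK using K0p by simp
    then show ?thesis using ep assms by auto
  qed
qed

definition "Xf a b = blinfun_apply (x a) (y b - y a)"

lemma Xf_defect:
  assumes "0 \<le> v" "v \<le> u" "u \<le> w" "w \<le> T"
  shows "norm (Xf v w - Xf v u - Xf u w) \<le> phi (om v u) (om u w)"
proof -
  have "Xf v w - Xf v u - Xf u w = blinfun_apply (x v - x u) (y w - y u)"
    unfolding Xf_def by (simp add: blinfun.diff_left blinfun.diff_right algebra_simps)
  then have "norm (Xf v w - Xf v u - Xf u w) \<le> norm (x v - x u) * norm (y w - y u)"
    using norm_blinfun by metis
  also have "\<dots> = norm (x u - x v) * norm (y w - y u)" by (simp add: norm_minus_commute)
  also have "\<dots> \<le> om v u powr al * om u w powr be"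
    using assms by (intro mult_mono incr_x incr_y) auto
  also have "\<dots> \<le> phi (om v u) (om u w)" unfolding phi_def by simp
  finally show ?thesis .
qed

lemma Xf_diag: "Xf a a = 0" unfolding Xf_def by simp

lemma sewing_limit:
  fixes Xi :: "real \<Rightarrow> real \<Rightarrow> 'a::banach"
  assumes defect: "\<And>v u w. 0 \<le> v \<Longrightarrow> v \<le> u \<Longrightarrow> u \<le> w \<Longrightarrow> w \<le> T \<Longrightarrow>
       norm (Xi v w - Xi v u - Xi u w) \<le> phi (om v u) (om u w)"
    and diag: "\<And>a. Xi a a = 0" and t: "0 \<le> t" "t \<le> T"
  shows "\<exists>I. RRS_has_limit (gsum Xi) t I"
proof (rule rrs_cauchy)
  fix eps :: real assume "0 < eps"
  then obtain e where e: "0 < e" "Cst e < eps" using Cst_small by blast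
  obtain P0 where P0: "partition_of 0 t P0" "goodP e P0" using good_partition_exists[OF t e(1)] by blast
  show "\<exists>P0. partition_of 0 t P0 \<and> (\<forall>P. partition_of 0 t P \<and> P0 \<subseteq> P \<longrightarrow> norm (gsum Xi P - gsum Xi P0) \<le> eps)"
  proof (intro exI conjI allI impI)
    show "partition_of 0 t P0" by fact
    fix P assume P: "partition_of 0 t P \<and> P0 \<subseteq> P"
    have "norm (gsum Xi P - gsum Xi P0) \<le> Cst e"
      using P P0 t e by (intro sewing_cauchy[OF defect diag]) auto
    then show "norm (gsum Xi P - gsum Xi P0) \<le> eps" using e by simp
  qed
qed

lemma fwd_exists:
  assumes "0 \<le> t" "t \<le> T"
  shows "\<exists>I. has_fwd_young x y t I"
proof -
  obtain I where I: "RRS_has_limit (gsum Xf) t I"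
    using sewing_limit[OF Xf_defect Xf_diag assms] by blast
  have eq: "\<forall>P. partition_of 0 t P \<longrightarrow> fwd_sum x y P = gsum Xf P"
    using fwd_gsum partition_MinMax(1) unfolding Xf_def by blast
  have "RRS_has_limit (fwd_sum x y) t I"
    using I rrs_cong[OF eq] by simp
  then show ?thesis unfolding has_fwd_young_def by blast
qed

end



lemma complete_UNIV_banach: "complete (UNIV :: 'a::banach set)"
  by (meson Cauchy_convergent UNIV_I complete_def convergent_def)

lemma cauchy_filter_conv:
  fixes f :: "real \<Rightarrow> 'a::banach"
  assumes "F \<noteq> bot"
    and C: "\<And>e. e > 0 \<Longrightarrow> \<exists>P. eventually P F \<and> (\<forall>u v. P u \<and> P v \<longrightarrow> dist (f u) (f v) < e)"
  shows "\<exists>L. (f \<longlongrightarrow> L) F"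
proof -
  have "cauchy_filter (filtermap f F)"
    unfolding cauchy_filter_metric_filtermap using C by blast
  moreover have "filtermap f F \<noteq> bot" using assms(1) by (simp add: filtermap_bot_iff)
  ultimately obtain L where "filtermap f F \<le> nhds L"
    using complete_UNIV_banach unfolding complete_uniform by auto
  then show ?thesis unfolding filterlim_def by blast
qed

context young
begin

context
  fixes f :: "real \<Rightarrow> 'b::banach" and c :: real
  assumes c: "0 < c"
    and inc: "\<And>u v. 0 \<le> u \<Longrightarrow> u \<le> v \<Longrightarrow> v \<le> T \<Longrightarrow> norm (f v - f u) \<le> om u v powr c"
begin

lemma dist_small:
  assumes "0 \<le> u" "u \<le> T" "0 \<le> v" "v \<le> T" "om (min u v) (max u v) \<le> e'" "0 \<le> e'"
  shows "dist (f u) (f v) \<le> e' powr c"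
proof (cases "u \<le> v")
  case True
  then have "dist (f u) (f v) = norm (f v - f u)" by (simp add: dist_norm norm_minus_commute)
  also have "\<dots> \<le> om u v powr c" using inc assms True by auto
  also have "\<dots> \<le> e' powr c" using assms True c om_nonneg by (intro powr_mono2) auto
  finally show ?thesis .
next
  case False
  then have "dist (f u) (f v) = norm (f u - f v)" by (simp add: dist_norm)
  also have "\<dots> \<le> om v u powr c" using inc assms False by auto
  also have "\<dots> \<le> e' powr c" using assms False c om_nonneg by (intro powr_mono2) auto
  finally show ?thesis .
qed

lemma rl_tendsto:
  assumes "0 \<le> r" "r < T"
  shows "(f \<longlongrightarrow> right_lim f r) (at_right r)"
proof -
  have "\<exists>L. (f \<longlongrightarrow> L) (at_right r)"
  proof (rule cauchy_filter_conv)
    show "at_right r \<noteq> bot" by simp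
    fix e :: real assume e: "0 < e"
    define e' where "e' = (e / 2) powr (1 / c)"
    have e'p: "0 < e'" unfolding e'_def using e by auto
    have e'c: "e' powr c = e / 2" unfolding e'_def using e c by (simp add: powr_powr)
    obtain d where d: "d > 0" "\<forall>u v. r < u \<and> u \<le> v \<and> v < r + d \<and> v \<le> T \<longrightarrow> om u v \<le> e'"
      using right_small[OF assms(1) e'p] by blast
    let ?d = "min d (T - r)"
    show "\<exists>P. eventually P (at_right r) \<and> (\<forall>u v. P u \<and> P v \<longrightarrow> dist (f u) (f v) < e)"
    proof (intro exI conjI allI impI)
      show "eventually (\<lambda>u. r < u \<and> u < r + ?d) (at_right r)"
        unfolding eventually_at_right_field using d assms by (intro exI[of _ "r + ?d"]) auto
      fix u v assume uv: "(r < u \<and> u < r + ?d) \<and> (r < v \<and> v < r + ?d)"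
      have "r < min u v" "min u v \<le> max u v" "max u v < r + d" "max u v \<le> T" using uv by auto
      then have "om (min u v) (max u v) \<le> e'" using d(2) by blast
      then have "dist (f u) (f v) \<le> e' powr c" using uv assms e'p by (intro dist_small) auto
      then show "dist (f u) (f v) < e" using e'c e by simp
    qed
  qed
  then obtain L where L: "(f \<longlongrightarrow> L) (at_right r)" by blast
  have "Lim (at_right r) f = L" using L by (intro tendsto_Lim) auto
  then show ?thesis unfolding right_lim_def using L by simp
qed

lemma ll_tendsto:
  assumes "0 < r" "r \<le> T"
  shows "(f \<longlongrightarrow> left_lim f r) (at_left r)"
proof -
  have "\<exists>L. (f \<longlongrightarrow> L) (at_left r)"
  proof (rule cauchy_filter_conv)
    show "at_left r \<noteq> bot" by simp
    fix e :: real assume e: "0 < e"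
    define e' where "e' = (e / 2) powr (1 / c)"
    have e'p: "0 < e'" unfolding e'_def using e by auto
    have e'c: "e' powr c = e / 2" unfolding e'_def using e c by (simp add: powr_powr)
    obtain d where d: "d > 0" "\<forall>u v. r - d < u \<and> u \<le> v \<and> v < r \<and> 0 \<le> u \<longrightarrow> om u v \<le> e'"
      using left_small[OF assms(2) e'p] by blast
    let ?d = "min d r"
    show "\<exists>P. eventually P (at_left r) \<and> (\<forall>u v. P u \<and> P v \<longrightarrow> dist (f u) (f v) < e)"
    proof (intro exI conjI allI impI)
      show "eventually (\<lambda>u. r - ?d < u \<and> u < r) (at_left r)"
        unfolding eventually_at_left_field using d assms by (intro exI[of _ "r - ?d"]) auto
      fix u v assume uv: "(r - ?d < u \<and> u < r) \<and> (r - ?d < v \<and> v < r)"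
      have "r - d < min u v" "min u v \<le> max u v" "max u v < r" "0 \<le> min u v" using uv by auto
      then have "om (min u v) (max u v) \<le> e'" using d(2) by blast
      then have "dist (f u) (f v) \<le> e' powr c" using uv assms e'p by (intro dist_small) auto
      then show "dist (f u) (f v) < e" using e'c e by simp
    qed
  qed
  then obtain L where L: "(f \<longlongrightarrow> L) (at_left r)" by blast
  have "Lim (at_left r) f = L" using L by (intro tendsto_Lim) auto
  then show ?thesis unfolding left_lim_def using L by simp
qed

lemma bound_right:
  assumes "0 \<le> r" "r < T" "r < b" "\<And>u. r < u \<Longrightarrow> u < b \<Longrightarrow> norm (g - f u) \<le> B"
  shows "norm (g - right_lim f r) \<le> B"
proof (rule tendsto_upperbound)
  show "((\<lambda>u. norm (g - f u)) \<longlongrightarrow> norm (g - right_lim f r)) (at_right r)"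
    by (intro tendsto_intros rl_tendsto assms)
  show "eventually (\<lambda>u. norm (g - f u) \<le> B) (at_right r)"
    unfolding eventually_at_right_field using assms by (intro exI[of _ b]) auto
qed simp

lemma bound_left:
  assumes "0 < r" "r \<le> T" "a < r" "\<And>u. a < u \<Longrightarrow> u < r \<Longrightarrow> norm (g - f u) \<le> B"
  shows "norm (g - left_lim f r) \<le> B"
proof (rule tendsto_upperbound)
  show "((\<lambda>u. norm (g - f u)) \<longlongrightarrow> norm (g - left_lim f r)) (at_left r)"
    by (intro tendsto_intros ll_tendsto assms)
  show "eventually (\<lambda>u. norm (g - f u) \<le> B) (at_left r)"
    unfolding eventually_at_left_field using assms by (intro exI[of _ a]) auto
qed simp


lemma B_right_jump:
  assumes "0 \<le> s" "s < s'" "s' \<le> T"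
  shows "norm (right_lim f s - f s) \<le> om s s' powr c"
proof -
  have "norm (f s - right_lim f s) \<le> om s s' powr c"
  proof (rule bound_right[OF assms(1) _ assms(2)])
    show "s < T" using assms by auto
    fix u assume u: "s < u" "u < s'"
    have "norm (f s - f u) = norm (f u - f s)" by (simp add: norm_minus_commute)
    also have "\<dots> \<le> om s u powr c" using inc assms u by auto
    also have "\<dots> \<le> om s s' powr c" using assms u c by (intro powr_mono2 om_nonneg om_mono) auto
    finally show "norm (f s - f u) \<le> om s s' powr c" .
  qed
  then show ?thesis by (simp add: norm_minus_commute)
qed

lemma B_left_jump:
  assumes "0 \<le> s" "s < s'" "s' \<le> T"
  shows "norm (f s' - left_lim f s') \<le> om s s' powr c"
proof (rule bound_left[OF _ assms(3) assms(2)])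
  show "0 < s'" using assms by auto
  fix u assume u: "s < u" "u < s'"
  have "norm (f s' - f u) \<le> om u s' powr c" using inc assms u by auto
  also have "\<dots> \<le> om s s' powr c" using assms u c by (intro powr_mono2 om_nonneg om_mono) auto
  finally show "norm (f s' - f u) \<le> om s s' powr c" .
qed

lemma B_rg1:
  assumes "0 \<le> s" "s < s'" "s' \<le> T" and rg: "\<forall>u v. s < u \<and> u \<le> v \<and> v \<le> s' \<longrightarrow> om u v \<le> e"
  shows "norm (f s' - right_lim f s) \<le> min e (om s s') powr c"
proof (rule bound_right[OF assms(1) _ assms(2)])
  show "s < T" using assms by auto
  fix u assume u: "s < u" "u < s'"
  have "norm (f s' - f u) \<le> om u s' powr c" using inc assms u by auto
  also have "\<dots> \<le> min e (om s s') powr c"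
    using assms u c rg by (intro powr_mono2 om_nonneg) (auto intro: om_mono)
  finally show "norm (f s' - f u) \<le> min e (om s s') powr c" .
qed

lemma B_rg2:
  assumes "0 \<le> s" "s < s'" "s' \<le> T" and rg: "\<forall>u v. s < u \<and> u \<le> v \<and> v \<le> s' \<longrightarrow> om u v \<le> e"
  shows "norm (f s' - left_lim f s') \<le> min e (om s s') powr c"
proof (rule bound_left[OF _ assms(3) assms(2)])
  show "0 < s'" using assms by auto
  fix u assume u: "s < u" "u < s'"
  have "norm (f s' - f u) \<le> om u s' powr c" using inc assms u by auto
  also have "\<dots> \<le> min e (om s s') powr c"
    using assms u c rg by (intro powr_mono2 om_nonneg) (auto intro: om_mono)
  finally show "norm (f s' - f u) \<le> min e (om s s') powr c" .
qed

lemma B_lg1: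
  assumes "0 \<le> s" "s < s'" "s' \<le> T" and lg: "\<forall>u v. s \<le> u \<and> u \<le> v \<and> v < s' \<longrightarrow> om u v \<le> e"
  shows "norm (left_lim f s' - f s) \<le> min e (om s s') powr c"
proof -
  have "norm (f s - left_lim f s') \<le> min e (om s s') powr c"
  proof (rule bound_left[OF _ assms(3) assms(2)])
    show "0 < s'" using assms by auto
    fix u assume u: "s < u" "u < s'"
    have "norm (f s - f u) = norm (f u - f s)" by (simp add: norm_minus_commute)
    also have "\<dots> \<le> om s u powr c" using inc assms u by auto
    also have "\<dots> \<le> min e (om s s') powr c"
      using assms u c lg by (intro powr_mono2 om_nonneg) (auto intro: om_mono)
    finally show "norm (f s - f u) \<le> min e (om s s') powr c" .
  qed
  then show ?thesis by (simp add: norm_minus_commute)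
qed

lemma B_lg2:
  assumes "0 \<le> s" "s < s'" "s' \<le> T" and lg: "\<forall>u v. s \<le> u \<and> u \<le> v \<and> v < s' \<longrightarrow> om u v \<le> e"
  shows "norm (right_lim f s - f s) \<le> min e (om s s') powr c"
proof -
  have "norm (f s - right_lim f s) \<le> min e (om s s') powr c"
  proof (rule bound_right[OF assms(1) _ assms(2)])
    show "s < T" using assms by auto
    fix u assume u: "s < u" "u < s'"
    have "norm (f s - f u) = norm (f u - f s)" by (simp add: norm_minus_commute)
    also have "\<dots> \<le> om s u powr c" using inc assms u by auto
    also have "\<dots> \<le> min e (om s s') powr c"
      using assms u c lg by (intro powr_mono2 om_nonneg) (auto intro: om_mono)
    finally show "norm (f s - f u) \<le> min e (om s s') powr c" .
  qed
  then show ?thesis by (simp add: norm_minus_commute)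
qed

end

end



lemma norm_bl_le:
  assumes "norm A \<le> a" "norm B \<le> b"
  shows "norm (blinfun_apply A B) \<le> a * b"
proof -
  have 1: "norm (blinfun_apply A B) \<le> norm A * norm B" by (rule norm_blinfun)
  have "0 \<le> a" using assms(1) norm_ge_zero[of A] by linarith
  then have "norm A * norm B \<le> a * b" using assms by (intro mult_mono) auto
  then show ?thesis using 1 by linarith
qed

context young
begin

definition "XQ a b = blinfun_apply (x b - x a) (y b - y a)"
definition "jr s = blinfun_apply (jump_right x s) (jump_right y s)"
definition "jl s = blinfun_apply (jump_left x s) (jump_left y s)"

lemma Bx_rj: assumes "0 \<le> s" "s < s'" "s' \<le> T" shows "norm (right_lim x s - x s) \<le> om s s' powr al"
  by (rule B_right_jump[OF params(1)]) (use assms in \<open>auto intro: incr_x\<close>)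

lemma By_rj: assumes "0 \<le> s" "s < s'" "s' \<le> T" shows "norm (right_lim y s - y s) \<le> om s s' powr be"
  by (rule B_right_jump[OF params(2)]) (use assms in \<open>auto intro: incr_y\<close>)

lemma Bx_lj: assumes "0 \<le> s" "s < s'" "s' \<le> T" shows "norm (x s' - left_lim x s') \<le> om s s' powr al"
  by (rule B_left_jump[OF params(1)]) (use assms in \<open>auto intro: incr_x\<close>)

lemma By_lj: assumes "0 \<le> s" "s < s'" "s' \<le> T" shows "norm (y s' - left_lim y s') \<le> om s s' powr be"
  by (rule B_left_jump[OF params(2)]) (use assms in \<open>auto intro: incr_y\<close>)

lemma Bx_rg1: assumes "0 \<le> s" "s < s'" "s' \<le> T" "\<forall>u v. s < u \<and> u \<le> v \<and> v \<le> s' \<longrightarrow> om u v \<le> e" shows "norm (x s' - right_lim x s) \<le> min e (om s s') powr al"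
  by (rule B_rg1[OF params(1)]) (use assms in \<open>auto intro: incr_x\<close>)

lemma By_rg1: assumes "0 \<le> s" "s < s'" "s' \<le> T" "\<forall>u v. s < u \<and> u \<le> v \<and> v \<le> s' \<longrightarrow> om u v \<le> e" shows "norm (y s' - right_lim y s) \<le> min e (om s s') powr be"
  by (rule B_rg1[OF params(2)]) (use assms in \<open>auto intro: incr_y\<close>)

lemma Bx_rg2: assumes "0 \<le> s" "s < s'" "s' \<le> T" "\<forall>u v. s < u \<and> u \<le> v \<and> v \<le> s' \<longrightarrow> om u v \<le> e" shows "norm (x s' - left_lim x s') \<le> min e (om s s') powr al"
  by (rule B_rg2[OF params(1)]) (use assms in \<open>auto intro: incr_x\<close>)

lemma By_rg2: assumes "0 \<le> s" "s < s'" "s' \<le> T" "\<forall>u v. s < u \<and> u \<le> v \<and> v \<le> s' \<longrightarrow> om u v \<le> e" shows "norm (y s' - left_lim y s') \<le> min e (om s s') powr be"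
  by (rule B_rg2[OF params(2)]) (use assms in \<open>auto intro: incr_y\<close>)

lemma Bx_lg1: assumes "0 \<le> s" "s < s'" "s' \<le> T" "\<forall>u v. s \<le> u \<and> u \<le> v \<and> v < s' \<longrightarrow> om u v \<le> e" shows "norm (left_lim x s' - x s) \<le> min e (om s s') powr al"
  by (rule B_lg1[OF params(1)]) (use assms in \<open>auto intro: incr_x\<close>)

lemma By_lg1: assumes "0 \<le> s" "s < s'" "s' \<le> T" "\<forall>u v. s \<le> u \<and> u \<le> v \<and> v < s' \<longrightarrow> om u v \<le> e" shows "norm (left_lim y s' - y s) \<le> min e (om s s') powr be"
  by (rule B_lg1[OF params(2)]) (use assms in \<open>auto intro: incr_y\<close>)

lemma Bx_lg2: assumes "0 \<le> s" "s < s'" "s' \<le> T" "\<forall>u v. s \<le> u \<and> u \<le> v \<and> v < s' \<longrightarrow> om u v \<le> e" shows "norm (right_lim x s - x s) \<le> min e (om s s') powr al"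
  by (rule B_lg2[OF params(1)]) (use assms in \<open>auto intro: incr_x\<close>)

lemma By_lg2: assumes "0 \<le> s" "s < s'" "s' \<le> T" "\<forall>u v. s \<le> u \<and> u \<le> v \<and> v < s' \<longrightarrow> om u v \<le> e" shows "norm (right_lim y s - y s) \<le> min e (om s s') powr be"
  by (rule B_lg2[OF params(2)]) (use assms in \<open>auto intro: incr_y\<close>)



lemma pw3:
  assumes "0 \<le> m" "0 \<le> e"
  shows "m powr al * min e m powr be \<le> m powr th' * e powr ka"
    "min e m powr al * m powr be \<le> m powr th' * e powr ka"
    "min e m powr al * min e m powr be \<le> m powr th' * e powr ka"
proof -
  have th: "th' = al + be - ka" "th' = be + al - ka" unfolding th'_def th_def by auto
  note pr = params
  show "m powr al * min e m powr be \<le> m powr th' * e powr ka"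
    unfolding th(1) using assms pr by (intro pw_gen) auto
  have "m powr be * min e m powr al \<le> m powr th' * e powr ka"
    unfolding th(2) using assms pr by (intro pw_gen) auto
  then show "min e m powr al * m powr be \<le> m powr th' * e powr ka" by (simp add: mult.commute)
  show "min e m powr al * min e m powr be \<le> m powr th' * e powr ka"
    unfolding th(1) using assms pr by (intro pw_gen) auto
qed

lemma jump_est:
  assumes s: "0 \<le> s" "s < s'" "s' \<le> T" and g: "goodI e s s'" and e: "0 \<le> e"
  shows "norm (XQ s s' - jr s - jl s') \<le> 4 * (om s s' powr th' * e powr ka)"
proof -
  let ?m = "om s s'" let ?e = "min e (om s s')"
  have m0: "0 \<le> ?m" using s by (intro om_nonneg) auto
  note pw = pw3[OF m0 e]
  let ?K = "?m powr th' * e powr ka"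
  from g show ?thesis unfolding goodI_def
  proof
    assume rg: "\<forall>u v. s < u \<and> u \<le> v \<and> v \<le> s' \<longrightarrow> om u v \<le> e"
    define X where "X = right_lim x s - x s"
    define A where "A = x s' - right_lim x s"
    define Y where "Y = right_lim y s - y s"
    define B where "B = y s' - right_lim y s"
    define Dx where "Dx = x s' - left_lim x s'"
    define Dy where "Dy = y s' - left_lim y s'"
    have nX: "norm X \<le> ?m powr al" unfolding X_def by (rule Bx_rj[OF s])
    have nY: "norm Y \<le> ?m powr be" unfolding Y_def by (rule By_rj[OF s])
    have nA: "norm A \<le> ?e powr al" unfolding A_def by (rule Bx_rg1[OF s rg])
    have nB: "norm B \<le> ?e powr be" unfolding B_def by (rule By_rg1[OF s rg])
    have nDx: "norm Dx \<le> ?e powr al" unfolding Dx_def by (rule Bx_rg2[OF s rg])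
    have nDy: "norm Dy \<le> ?e powr be" unfolding Dy_def by (rule By_rg2[OF s rg])
    have ex: "x s' - x s = X + A" and ey: "y s' - y s = Y + B" unfolding X_def A_def Y_def B_def by simp_all
    have "XQ s s' - jr s - jl s' = blinfun_apply X B + blinfun_apply A Y + blinfun_apply A B - blinfun_apply Dx Dy"
      unfolding XQ_def jr_def jl_def jump_right_def jump_left_def ex ey
      unfolding X_def[symmetric] Y_def[symmetric] Dx_def[symmetric] Dy_def[symmetric]
      by (simp add: blinfun.add_left blinfun.add_right)
    also have "norm \<dots> \<le> norm (blinfun_apply X B) + norm (blinfun_apply A Y) + norm (blinfun_apply A B) + norm (blinfun_apply Dx Dy)"
      by (rule order_trans[OF norm_triangle_ineq4]) (intro add_mono norm_triangle_le order.refl norm_triangle_ineq)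
    also have "\<dots> \<le> ?K + ?K + ?K + ?K"
    proof (intro add_mono)
      show "norm (blinfun_apply X B) \<le> ?K" using norm_bl_le[OF nX nB] pw(1) by linarith
      show "norm (blinfun_apply A Y) \<le> ?K" using norm_bl_le[OF nA nY] pw(2) by linarith
      show "norm (blinfun_apply A B) \<le> ?K" using norm_bl_le[OF nA nB] pw(3) by linarith
      show "norm (blinfun_apply Dx Dy) \<le> ?K" using norm_bl_le[OF nDx nDy] pw(3) by linarith
    qed
    finally show ?thesis by (simp add: mult_ac)
  next
    assume lg: "\<forall>u v. s \<le> u \<and> u \<le> v \<and> v < s' \<longrightarrow> om u v \<le> e"
    define X where "X = right_lim x s - x s"
    define X' where "X' = left_lim x s' - x s"
    define Y where "Y = right_lim y s - y s"
    define Y' where "Y' = left_lim y s' - y s"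
    define Dx where "Dx = x s' - left_lim x s'"
    define Dy where "Dy = y s' - left_lim y s'"
    have nX: "norm X \<le> ?e powr al" unfolding X_def by (rule Bx_lg2[OF s lg])
    have nY: "norm Y \<le> ?e powr be" unfolding Y_def by (rule By_lg2[OF s lg])
    have nX': "norm X' \<le> ?e powr al" unfolding X'_def by (rule Bx_lg1[OF s lg])
    have nY': "norm Y' \<le> ?e powr be" unfolding Y'_def by (rule By_lg1[OF s lg])
    have nDx: "norm Dx \<le> ?m powr al" unfolding Dx_def by (rule Bx_lj[OF s])
    have nDy: "norm Dy \<le> ?m powr be" unfolding Dy_def by (rule By_lj[OF s])
    have ex: "x s' - x s = X' + Dx" and ey: "y s' - y s = Y' + Dy" unfolding X'_def Dx_def Y'_def Dy_def by simp_all
    have "XQ s s' - jr s - jl s' = blinfun_apply X' Y' + blinfun_apply X' Dy + blinfun_apply Dx Y' - blinfun_apply X Y"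
      unfolding XQ_def jr_def jl_def jump_right_def jump_left_def ex ey
      unfolding X_def[symmetric] Y_def[symmetric] Dx_def[symmetric] Dy_def[symmetric]
      by (simp add: blinfun.add_left blinfun.add_right)
    also have "norm \<dots> \<le> norm (blinfun_apply X' Y') + norm (blinfun_apply X' Dy) + norm (blinfun_apply Dx Y') + norm (blinfun_apply X Y)"
      by (rule order_trans[OF norm_triangle_ineq4]) (intro add_mono norm_triangle_le order.refl norm_triangle_ineq)
    also have "\<dots> \<le> ?K + ?K + ?K + ?K"
    proof (intro add_mono)
      show "norm (blinfun_apply X' Y') \<le> ?K" using norm_bl_le[OF nX' nY'] pw(3) by linarith
      show "norm (blinfun_apply X' Dy) \<le> ?K" using norm_bl_le[OF nX' nDy] pw(2) by linarith
      show "norm (blinfun_apply Dx Y') \<le> ?K" using norm_bl_le[OF nDx nY'] pw(1) by linarith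
      show "norm (blinfun_apply X Y) \<le> ?K" using norm_bl_le[OF nX nY] pw(3) by linarith
    qed
    finally show ?thesis by (simp add: mult_ac)
  qed
qed

lemma XQ_defect:
  assumes "0 \<le> v" "v \<le> u" "u \<le> w" "w \<le> T"
  shows "norm (XQ v w - XQ v u - XQ u w) \<le> phi (om v u) (om u w)"
proof -
  define A where "A = x u - x v"
  define B where "B = x w - x u"
  define C where "C = y u - y v"
  define D where "D = y w - y u"
  have e1: "x w - x v = A + B" "y w - y v = C + D" unfolding A_def B_def C_def D_def by simp_all
  have "XQ v w - XQ v u - XQ u w = blinfun_apply A D + blinfun_apply B C"
    unfolding XQ_def e1 unfolding A_def[symmetric] B_def[symmetric] C_def[symmetric] D_def[symmetric]
    by (simp add: blinfun.add_left blinfun.add_right)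
  also have "norm \<dots> \<le> norm (blinfun_apply A D) + norm (blinfun_apply B C)" by (rule norm_triangle_ineq)
  also have "\<dots> \<le> om v u powr al * om u w powr be + om u w powr al * om v u powr be"
  proof (intro add_mono norm_bl_le)
    show "norm A \<le> om v u powr al" unfolding A_def using incr_x[of v u] assms by (simp add: norm_minus_commute)
    show "norm D \<le> om u w powr be" unfolding D_def using incr_y[of u w] assms by simp
    show "norm B \<le> om u w powr al" unfolding B_def using incr_x[of u w] assms by simp
    show "norm C \<le> om v u powr be" unfolding C_def using incr_y[of v u] assms by simp
  qed
  also have "\<dots> = phi (om v u) (om u w)" unfolding phi_def by (simp add: mult.commute)
  finally show ?thesis .
qed

lemma XQ_diag: "XQ a a = 0" unfolding XQ_def by simp

lemma jl_bound:
  assumes "0 \<le> s" "s < r" "r \<le> T"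
  shows "norm (jl r) \<le> om s r powr th"
proof -
  have "norm (jl r) \<le> om s r powr al * om s r powr be"
    unfolding jl_def jump_left_def by (intro norm_bl_le Bx_lj By_lj assms)
  also have "\<dots> = om s r powr th" unfolding th_def by (simp add: powr_add)
  finally show ?thesis .
qed

lemma jr_bound:
  assumes "0 \<le> s" "s < r" "r \<le> T"
  shows "norm (jr s) \<le> om s r powr th"
proof -
  have "norm (jr s) \<le> om s r powr al * om s r powr be"
    unfolding jr_def jump_right_def by (intro norm_bl_le Bx_rj By_rj assms)
  also have "\<dots> = om s r powr th" unfolding th_def by (simp add: powr_add)
  finally show ?thesis .
qed

end



lemma has_sum_tail:
  fixes f :: "real \<Rightarrow> 'a::real_normed_vector"
  assumes "(f has_sum S) A" "0 < e"
  shows "\<exists>F. finite F \<and> F \<subseteq> A \<and> (\<forall>G. finite G \<and> F \<subseteq> G \<and> G \<subseteq> A \<longrightarrow> norm (sum f G - S) < e)"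
proof -
  have "eventually (\<lambda>G. dist (sum f G) S < e) (finite_subsets_at_top A)"
    using assms unfolding has_sum_def tendsto_iff by blast
  then show ?thesis unfolding eventually_finite_subsets_at_top dist_norm by blast
qed

lemma norm4: "norm ((a::'a::real_normed_vector) + b + c + d) \<le> norm a + norm b + norm c + norm d"
  using norm_triangle_ineq[of "a+b+c" d] norm_triangle_ineq[of "a+b" c] norm_triangle_ineq[of a b] by linarith

context young
begin

lemma small_coeff:
  assumes "0 \<le> K" "0 < eps" shows "\<exists>e>0. K * e powr ka < eps"
proof (cases "K = 0")
  case True then show ?thesis using assms by (intro exI[of _ 1]) auto
next
  case False
  then have Kp: "0 < K" using assms by auto
  define e where "e = (eps / (2 * K)) powr (1 / ka)"
  have ep: "0 < e" unfolding e_def using assms Kp by auto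
  have "e powr ka = eps / (2 * K)" unfolding e_def using params assms Kp by (simp add: powr_powr)
  then have "K * e powr ka = eps / 2" using Kp by simp
  then show ?thesis using ep assms by auto
qed

lemma gsum_om_th:
  assumes "finite P" "P \<noteq> {}" "P \<subseteq> {0..T}" "1 \<le> r"
  shows "gsum (\<lambda>a b. om a b powr r) P \<le> W powr r"
proof -
  have "gsum (\<lambda>a b. om a b powr r) P \<le> gsum (\<lambda>a b. W powr (r - 1) * om a b) P"
  proof (rule gsum_mono[OF assms(1)])
    fix s assume s: "s \<in> P" "s < Max P"
    have n: "nxt P s \<in> P" "s < nxt P s" using nxt_props[OF assms(1) s] by auto
    show "om s (nxt P s) powr r \<le> W powr (r - 1) * om s (nxt P s)"
      using s n assms unfolding W_def by (intro pow_le_lin om_nonneg om_mono) auto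
  qed
  also have "\<dots> = W powr (r - 1) * gsum om P" unfolding gsum_def by (simp add: sum_distrib_left)
  also have "\<dots> \<le> W powr (r - 1) * W"
  proof (intro mult_left_mono)
    have "gsum om P \<le> om (Min P) (Max P)" by (rule gsum_om_le[OF assms(1-3)])
    also have "\<dots> \<le> W" unfolding W_def using assms by (intro om_mono) auto
    finally show "gsum om P \<le> W" .
  qed auto
  also have "\<dots> = W powr r"
  proof (cases "W = 0")
    case False
    have "W powr r = W powr ((r - 1) + 1)" by simp
    also have "\<dots> = W powr (r - 1) * W powr 1" by (rule powr_add)
    finally show ?thesis using W_nonneg by simp
  qed simp
  finally show ?thesis .
qed

lemma jl_abs_summable:
  assumes "t \<le> T"
  shows "jl summable_on {0<..t}"
proof (rule abs_summable_summable, rule nonneg_bdd_above_summable_on)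
  show "bdd_above (sum (\<lambda>r. norm (jl r)) ` {F. F \<subseteq> {0<..t} \<and> finite F})"
  proof (rule bdd_aboveI[of _ "W powr th"])
    fix v assume "v \<in> sum (\<lambda>r. norm (jl r)) ` {F. F \<subseteq> {0<..t} \<and> finite F}"
    then obtain F where F: "F \<subseteq> {0<..t}" "finite F" "v = sum (\<lambda>r. norm (jl r)) F" by auto
    define P where "P = insert 0 F"
    have fP: "finite P" "P \<noteq> {}" using F unfolding P_def by auto
    have minP: "Min P = 0" unfolding P_def using F by (intro Min_eqI) auto
    have "P - {0} = F" unfolding P_def using F by auto
    then have PF: "P - {Min P} = F" using minP by simp
    have PT: "P \<subseteq> {0..T}" unfolding P_def using F assms T by auto
    have "v = (\<Sum>s\<in>{s\<in>P. s < Max P}. norm (jl (nxt P s)))"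
      unfolding F(3) using sum.reindex_bij_betw[OF nxt_bij[OF fP(1)], of "\<lambda>r. norm (jl r)"] PF by simp
    also have "\<dots> \<le> gsum (\<lambda>a b. om a b powr th) P"
      unfolding gsum_def
    proof (rule sum_mono)
      fix s assume s: "s \<in> {s\<in>P. s < Max P}"
      have n: "nxt P s \<in> P" "s < nxt P s" using nxt_props[OF fP(1)] s by auto
      show "norm (jl (nxt P s)) \<le> om s (nxt P s) powr th"
        using s n PT by (intro jl_bound) auto
    qed
    also have "\<dots> \<le> W powr th" using gsum_om_th[OF fP PT] params by auto
    finally show "v \<le> W powr th" .
  qed
qed auto

lemma jr_abs_summable:
  assumes "0 \<le> t" "t \<le> T"
  shows "jr summable_on {0..<t}"
proof (rule abs_summable_summable, rule nonneg_bdd_above_summable_on)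
  show "bdd_above (sum (\<lambda>r. norm (jr r)) ` {F. F \<subseteq> {0..<t} \<and> finite F})"
  proof (rule bdd_aboveI[of _ "W powr th"])
    fix v assume "v \<in> sum (\<lambda>r. norm (jr r)) ` {F. F \<subseteq> {0..<t} \<and> finite F}"
    then obtain F where F: "F \<subseteq> {0..<t}" "finite F" "v = sum (\<lambda>r. norm (jr r)) F" by auto
    define P where "P = insert t F"
    have fP: "finite P" "P \<noteq> {}" using F unfolding P_def by auto
    have maxP: "Max P = t" unfolding P_def using F by (intro Max_eqI) auto
    have "{s\<in>P. s < t} = F" unfolding P_def using F by auto
    then have PF: "{s\<in>P. s < Max P} = F" using maxP by simp
    have PT: "P \<subseteq> {0..T}" unfolding P_def using F assms by auto
    have "v = (\<Sum>s\<in>{s\<in>P. s < Max P}. norm (jr s))" unfolding F(3) PF ..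
    also have "\<dots> \<le> gsum (\<lambda>a b. om a b powr th) P"
      unfolding gsum_def
    proof (rule sum_mono)
      fix s assume s: "s \<in> {s\<in>P. s < Max P}"
      have n: "nxt P s \<in> P" "s < nxt P s" using nxt_props[OF fP(1)] s by auto
      show "norm (jr s) \<le> om s (nxt P s) powr th"
        using s n PT by (intro jr_bound) auto
    qed
    also have "\<dots> \<le> W powr th" using gsum_om_th[OF fP PT] params by auto
    finally show "v \<le> W powr th" .
  qed
qed auto

lemma Q_limit:
  assumes t: "0 \<le> t" "t \<le> T"
  shows "RRS_has_limit (gsum XQ) t (infsum jl {0<..t} + infsum jr {0..<t})"
  unfolding RRS_has_limit_def
proof (intro allI impI)
  fix eps :: real assume eps: "0 < eps"
  define S1 where "S1 = infsum jl {0<..t}"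
  define S2 where "S2 = infsum jr {0..<t}"
  have h1: "(jl has_sum S1) {0<..t}" unfolding S1_def using jl_abs_summable[OF t(2)] by simp
  have h2: "(jr has_sum S2) {0..<t}" unfolding S2_def using jr_abs_summable[OF t] by simp
  obtain F1 where F1: "finite F1" "F1 \<subseteq> {0<..t}" "\<And>G. finite G \<Longrightarrow> F1 \<subseteq> G \<Longrightarrow> G \<subseteq> {0<..t} \<Longrightarrow> norm (sum jl G - S1) < eps / 4"
    using has_sum_tail[OF h1, of "eps / 4"] eps by auto
  obtain F2 where F2: "finite F2" "F2 \<subseteq> {0..<t}" "\<And>G. finite G \<Longrightarrow> F2 \<subseteq> G \<Longrightarrow> G \<subseteq> {0..<t} \<Longrightarrow> norm (sum jr G - S2) < eps / 4"
    using has_sum_tail[OF h2, of "eps / 4"] eps by auto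
  define K1 where "K1 = 2 * 2 powr th' * Z * W powr th' + 4 * W powr th'"
  have K1: "0 \<le> K1" unfolding K1_def using Z_nonneg W_nonneg by auto
  obtain e where e: "0 < e" "K1 * e powr ka < eps / 2" using small_coeff[OF K1, of "eps / 2"] eps by auto
  have CK: "Cst e + 4 * (e powr ka * W powr th') = K1 * e powr ka"
    unfolding Cst_def K1_def by (simp add: algebra_simps)
  obtain P0 where P0: "partition_of 0 t P0" "goodP e P0" using good_partition_exists[OF t e(1)] by blast
  define P1 where "P1 = P0 \<union> F1 \<union> F2"
  have P1: "partition_of 0 t P1" using P0(1) F1 F2 unfolding P1_def partition_of_def by auto
  have g1: "goodP e P1" using goodP_refine[OF P0(1) P1 _ P0(2)] unfolding P1_def by auto
  note m1 = partition_MinMax[OF P1]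
  have P1T: "P1 \<subseteq> {0..T}" using P1 t unfolding partition_of_def by auto
  let ?I = "{s\<in>P1. s < Max P1}"
  define G1 where "G1 = P1 \<inter> {0<..t}"
  define G2 where "G2 = P1 \<inter> {0..<t}"
  have G1: "G1 = P1 - {Min P1}" unfolding G1_def using P1 m1 unfolding partition_of_def by auto
  have G2: "G2 = ?I" unfolding G2_def using P1 m1 unfolding partition_of_def by auto
  have B: "norm (gsum XQ P1 - (sum jl G1 + sum jr G2)) \<le> 4 * (e powr ka * W powr th')"
  proof -
    have s1: "sum jl G1 = (\<Sum>s\<in>?I. jl (nxt P1 s))"
      unfolding G1 using sum.reindex_bij_betw[OF nxt_bij[OF m1(1)], of jl] by simp
    have eq: "gsum XQ P1 - (sum jl G1 + sum jr G2) = (\<Sum>s\<in>?I. XQ s (nxt P1 s) - jr s - jl (nxt P1 s))"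
      unfolding s1 G2 gsum_def by (simp add: sum_subtractf sum.distrib algebra_simps)
    have "norm (gsum XQ P1 - (sum jl G1 + sum jr G2)) \<le> (\<Sum>s\<in>?I. norm (XQ s (nxt P1 s) - jr s - jl (nxt P1 s)))"
      unfolding eq by (rule norm_sum)
    also have "\<dots> \<le> (\<Sum>s\<in>?I. 4 * e powr ka * om s (nxt P1 s) powr th')"
    proof (rule sum_mono)
      fix s assume s: "s \<in> ?I"
      have n: "nxt P1 s \<in> P1" "s < nxt P1 s" using nxt_props[OF m1(1)] s by auto
      have "goodI e s (nxt P1 s)" using g1 s unfolding goodP_def by auto
      then have "norm (XQ s (nxt P1 s) - jr s - jl (nxt P1 s)) \<le> 4 * (om s (nxt P1 s) powr th' * e powr ka)"
        using s n P1T e by (intro jump_est) auto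
      then show "norm (XQ s (nxt P1 s) - jr s - jl (nxt P1 s)) \<le> 4 * e powr ka * om s (nxt P1 s) powr th'"
        by (simp add: mult_ac)
    qed
    also have "\<dots> = 4 * e powr ka * gsum (\<lambda>a b. om a b powr th') P1"
      unfolding gsum_def by (simp add: sum_distrib_left)
    also have "\<dots> \<le> 4 * e powr ka * W powr th'"
      using gsum_om_th[OF m1(1,2) P1T] params by (intro mult_left_mono) auto
    finally show ?thesis by (simp add: mult_ac)
  qed
  show "\<exists>P0. partition_of 0 t P0 \<and> (\<forall>P. partition_of 0 t P \<and> P0 \<subseteq> P \<longrightarrow> norm (gsum XQ P - (infsum jl {0<..t} + infsum jr {0..<t})) < eps)"
  proof (intro exI conjI allI impI)
    show "partition_of 0 t P1" by fact
    fix P assume P: "partition_of 0 t P \<and> P1 \<subseteq> P"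
    have A: "norm (gsum XQ P - gsum XQ P1) \<le> Cst e"
      using P P1 t e g1 by (intro sewing_cauchy[OF XQ_defect XQ_diag]) auto
    have C1: "norm (sum jl G1 - S1) < eps / 4"
      using P1 F1 unfolding G1_def P1_def partition_of_def by (intro F1(3)) auto
    have C2: "norm (sum jr G2 - S2) < eps / 4"
      using P1 F2 unfolding G2_def P1_def partition_of_def by (intro F2(3)) auto
    have "norm (gsum XQ P - (S1 + S2)) \<le> norm (gsum XQ P - gsum XQ P1) + norm (gsum XQ P1 - (sum jl G1 + sum jr G2))
        + norm (sum jl G1 - S1) + norm (sum jr G2 - S2)"
    proof -
      have "gsum XQ P - (S1 + S2) = (gsum XQ P - gsum XQ P1) + (gsum XQ P1 - (sum jl G1 + sum jr G2))
        + (sum jl G1 - S1) + (sum jr G2 - S2)" by simp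
      then show ?thesis by (simp only: norm4)
    qed
    also have "\<dots> < eps" using A B C1 C2 CK e by linarith
    finally show "norm (gsum XQ P - (infsum jl {0<..t} + infsum jr {0..<t})) < eps"
      unfolding S1_def S2_def .
  qed
qed

end



lemma rrs_add:
  fixes S S' :: "real set \<Rightarrow> 'a::real_normed_vector"
  assumes "RRS_has_limit S t I" "RRS_has_limit S' t I'"
  shows "RRS_has_limit (\<lambda>P. S P + S' P) t (I + I')"
  unfolding RRS_has_limit_def
proof (intro allI impI)
  fix e :: real assume e: "0 < e"
  obtain P1 where P1: "partition_of 0 t P1" "\<And>P. partition_of 0 t P \<Longrightarrow> P1 \<subseteq> P \<Longrightarrow> norm (S P - I) < e / 2"
    using assms(1) e unfolding RRS_has_limit_def by (meson half_gt_zero)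
  obtain P2 where P2: "partition_of 0 t P2" "\<And>P. partition_of 0 t P \<Longrightarrow> P2 \<subseteq> P \<Longrightarrow> norm (S' P - I') < e / 2"
    using assms(2) e unfolding RRS_has_limit_def by (meson half_gt_zero)
  show "\<exists>P0. partition_of 0 t P0 \<and> (\<forall>P. partition_of 0 t P \<and> P0 \<subseteq> P \<longrightarrow> norm (S P + S' P - (I + I')) < e)"
  proof (intro exI conjI allI impI)
    show "partition_of 0 t (P1 \<union> P2)" using P1 P2 unfolding partition_of_def by auto
    fix P assume P: "partition_of 0 t P \<and> P1 \<union> P2 \<subseteq> P"
    have "norm (S P + S' P - (I + I')) \<le> norm (S P - I) + norm (S' P - I')"
      using norm_triangle_ineq[of "S P - I" "S' P - I'"] by (simp add: algebra_simps)
    also have "\<dots> < e / 2 + e / 2" using P P1 P2 by (intro add_strict_mono) auto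
    finally show "norm (S P + S' P - (I + I')) < e" by simp
  qed
qed

context young
begin

lemma bwd_eq:
  assumes "finite P" shows "bwd_sum x y P = fwd_sum x y P + gsum XQ P"
proof -
  have e: "(\<lambda>a b. blinfun_apply (x b) (y b - y a)) = (\<lambda>a b. blinfun_apply (x a) (y b - y a) + XQ a b)"
    by (intro ext) (simp add: XQ_def blinfun.diff_left)
  have "fwd_sum x y P + gsum XQ P = gsum (\<lambda>a b. blinfun_apply (x a) (y b - y a) + XQ a b) P"
    unfolding fwd_gsum[OF assms] by (rule gsum_add)
  then show ?thesis unfolding bwd_gsum[OF assms] e by simp
qed

lemma main_t:
  assumes t: "0 \<le> t" "t \<le> T"
  shows "\<exists>If. has_fwd_young x y t If \<and> has_bwd_young x y t (If + (infsum jl {0<..t} + infsum jr {0..<t}))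
    \<and> (jl has_sum infsum jl {0<..t}) {0<..t} \<and> (jr has_sum infsum jr {0..<t}) {0..<t}"
proof -
  obtain If where If: "has_fwd_young x y t If" using fwd_exists[OF t] by blast
  have Q: "RRS_has_limit (gsum XQ) t (infsum jl {0<..t} + infsum jr {0..<t})" by (rule Q_limit[OF t])
  have "RRS_has_limit (\<lambda>P. fwd_sum x y P + gsum XQ P) t (If + (infsum jl {0<..t} + infsum jr {0..<t}))"
    using rrs_add[OF If[unfolded has_fwd_young_def] Q] .
  moreover have "\<forall>P. partition_of 0 t P \<longrightarrow> bwd_sum x y P = fwd_sum x y P + gsum XQ P"
    using bwd_eq partition_MinMax(1) by blast
  ultimately have "has_bwd_young x y t (If + (infsum jl {0<..t} + infsum jr {0..<t}))"
    unfolding has_bwd_young_def using rrs_cong[of t "bwd_sum x y" "\<lambda>P. fwd_sum x y P + gsum XQ P"] by simp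
  moreover have "(jl has_sum infsum jl {0<..t}) {0<..t}" using jl_abs_summable[OF t(2)] by simp
  moreover have "(jr has_sum infsum jr {0..<t}) {0..<t}" using jr_abs_summable[OF t] by simp
  ultimately show ?thesis using If by blast
qed

lemma jr_zero:
  assumes "cadlag_on T x" "s \<in> {0..<T}"
  shows "jr s = 0"
proof -
  have "continuous (at_right s) x" using assms unfolding cadlag_on_def by auto
  then have "(x \<longlongrightarrow> x s) (at_right s)" by (simp add: continuous_within)
  then have "right_lim x s = x s" unfolding right_lim_def by (intro tendsto_Lim) auto
  then show ?thesis unfolding jr_def jump_right_def by simp
qed

lemma jl_zero:
  assumes "caglad_on T y" "s \<in> {0<..T}"
  shows "jl s = 0"
proof -
  have "continuous (at_left s) y" using assms unfolding caglad_on_def by auto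
  then have "(y \<longlongrightarrow> y s) (at_left s)" by (simp add: continuous_within)
  then have "left_lim y s = y s" unfolding left_lim_def by (intro tendsto_Lim) auto
  then show ?thesis unfolding jl_def jump_left_def by simp
qed

end

theorem mainTheorem15:
  fixes x :: "real \<Rightarrow> ('v::euclidean_space \<Rightarrow>\<^sub>L 'w::euclidean_space)"
    and y :: "real \<Rightarrow> 'v"
    and p q T :: real
  assumes "0 \<le> T" and "0 < p" and "0 < q"
    and "1 / p + 1 / q > 1"
    and "finite_pvar p 0 T x" and "finite_pvar q 0 T y"
  shows "(cadlag_on T x \<longrightarrow>
           (\<forall>t\<in>{0..T}. \<exists>Ib If S.
              has_bwd_young x y t Ib \<and> has_fwd_young x y t If \<and>
              ((\<lambda>r. blinfun_apply (jump_left x r) (jump_left y r)) has_sum S) {0<..t} \<and>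
              Ib - If = S))
       \<and> (caglad_on T y \<longrightarrow>
           (\<forall>t\<in>{0..T}. \<exists>Ib If S.
              has_bwd_young x y t Ib \<and> has_fwd_young x y t If \<and>
              ((\<lambda>r. blinfun_apply (jump_right x r) (jump_right y r)) has_sum S) {0..<t} \<and>
              Ib - If = S))
       \<and> (cadlag_on T x \<and> caglad_on T y \<longrightarrow>
           (\<forall>t\<in>{0..T}. \<exists>I. has_bwd_young x y t I \<and> has_fwd_young x y t I))"
proof -
  interpret young x y p q T using assms by unfold_locales
  have jl_eq: "(\<lambda>r. blinfun_apply (jump_left x r) (jump_left y r)) = jl" by (rule ext) (simp add: jl_def)
  have jr_eq: "(\<lambda>r. blinfun_apply (jump_right x r) (jump_right y r)) = jr" by (rule ext) (simp add: jr_def)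
  have S2z: "infsum jr {0..<t} = 0" if "cadlag_on T x" "t \<le> T" for t
    using jr_zero[OF that(1)] that(2) by (intro infsum_0) auto
  have S1z: "infsum jl {0<..t} = 0" if "caglad_on T y" "t \<le> T" for t
    using jl_zero[OF that(1)] that(2) by (intro infsum_0) auto
  show ?thesis
  proof (intro conjI impI ballI)
    fix t assume c: "cadlag_on T x" and t: "t \<in> {0..T}"
    obtain If where If: "has_fwd_young x y t If" "has_bwd_young x y t (If + (infsum jl {0<..t} + infsum jr {0..<t}))"
      "(jl has_sum infsum jl {0<..t}) {0<..t}" using main_t t by auto
    show "\<exists>Ib If S. has_bwd_young x y t Ib \<and> has_fwd_young x y t If \<and>
              ((\<lambda>r. blinfun_apply (jump_left x r) (jump_left y r)) has_sum S) {0<..t} \<and> Ib - If = S"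
      using If S2z[OF c] t unfolding jl_eq by (intro exI[of _ "If + infsum jl {0<..t}"] exI[of _ If] exI[of _ "infsum jl {0<..t}"]) auto
  next
    fix t assume c: "caglad_on T y" and t: "t \<in> {0..T}"
    obtain If where If: "has_fwd_young x y t If" "has_bwd_young x y t (If + (infsum jl {0<..t} + infsum jr {0..<t}))"
      "(jr has_sum infsum jr {0..<t}) {0..<t}" using main_t t by auto
    show "\<exists>Ib If S. has_bwd_young x y t Ib \<and> has_fwd_young x y t If \<and>
              ((\<lambda>r. blinfun_apply (jump_right x r) (jump_right y r)) has_sum S) {0..<t} \<and> Ib - If = S"
      using If S1z[OF c] t unfolding jr_eq by (intro exI[of _ "If + infsum jr {0..<t}"] exI[of _ If] exI[of _ "infsum jr {0..<t}"]) auto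
  next
    fix t assume c: "cadlag_on T x \<and> caglad_on T y" and t: "t \<in> {0..T}"
    obtain If where If: "has_fwd_young x y t If" "has_bwd_young x y t (If + (infsum jl {0<..t} + infsum jr {0..<t}))"
      using main_t t by auto
    show "\<exists>I. has_bwd_young x y t I \<and> has_fwd_young x y t I"
      using If S1z S2z c t by (intro exI[of _ If]) auto
  qed
qed


end
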